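(* Under the standing assumptions, there exists a unique $\lambda\in(L^2_{M^{-1}}(\mathbb R^d))^d$ satisfying $Q(\lambda)=\nabla_vM$ (componentwise) and $\int_{\mathbb R^d}\lambda(v)\,dv=0$. Moreover there is $C$ such that $|\lambda(v)|\le CM(v)$ and $|\partial_{v_i}\lambda_j(v)|\le CM(v)$ for all $v\in\mathbb R^d$ and $1\le i,j\le d$.
   Context: Standing assumptions: $d\ge1$, $\alpha\in[1,2)$. $M:\mathbb R^d\to(0,\infty)$ satisfies $M(v)=M(-v)$, $\int M\,dv=1$, $|v|^{d+\alpha}M(v)\to\gamma>0$ as $|v|\to\infty$, $|\nabla_vM(v)|\le CM(v)/(1+|v|)$ and $|D_v^2M(v)|\le CM(v)$. The cross section $\sigma:\mathbb R^d\times\mathbb R^d\to\mathbb R$ satisfies $\sigma(v,v')=\sigma(v',v)$, $\nu_1\le\sigma\le\nu_2$ for constants $0<\nu_1\le\nu_2$, $|\nabla_v\sigma(v',v)|\le C/(1+|v|)$, and $|\sigma(v,v')-\nu_0|\le C/(1+|v|)$ for all $v,v'$, for some constant $\nu_0$. The collision frequency $\nu(v):=\int\sigma(v',v)M(v')\,dv'$ is assumed even. The linear Boltzmann operator is $Q(f)(v)=\int[\sigma(v,v')M(v)f(v')-\sigma(v',v)M(v')f(v)]\,dv'$. For a positive weight $w$, $L^2_{w^{-1}}$ denotes the $L^2$ space with norm $(\int|f|^2/w)^{1/2}$. *)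

theory Defs
  imports "HOL-Analysis.Analysis"
begin

text \<open>Velocity space R^d is modelled as real^'d for a finite index type 'd (so d = CARD('d) \<ge> 1).\<close>

definition Qop :: "(real^'d::finite \<Rightarrow> real^'d \<Rightarrow> real) \<Rightarrow> (real^'d \<Rightarrow> real)
                    \<Rightarrow> (real^'d \<Rightarrow> real) \<Rightarrow> real^'d \<Rightarrow> real" where
  "Qop \<sigma> M f v = (\<integral>v'. (\<sigma> v v' * M v * f v' - \<sigma> v' v * M v' * f v) \<partial>lborel)"

definition L2w :: "(real^'d::finite \<Rightarrow> real) \<Rightarrow> (real^'d \<Rightarrow> real) \<Rightarrow> bool" where
  "L2w w f \<longleftrightarrow> f \<in> borel_measurable lborel \<and> integrable lborel (\<lambda>v. (f v)\<^sup>2 / w v)"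

end

theory Submission
  imports Defs
begin



lemma deriv_bound_aux:
  fixes m a n dm da dn dh hh c Cc Tb Cb Ch n1 :: real
  assumes m: "0 < m" and n1: "0 < n1" and nn: "n1 \<le> n" and adm: "\<bar>dm\<bar> \<le> Cc * m" and aa: "\<bar>a\<bar> \<le> Tb"
    and ada: "\<bar>da\<bar> \<le> Cb"
    and adn: "\<bar>dn\<bar> \<le> Cc" and ahh: "\<bar>hh\<bar> \<le> Ch * m" and adh: "\<bar>dh\<bar> \<le> Ch * m"
    and Cc: "0 \<le> Cc" and Tb: "0 \<le> Tb" and Cb: "0 \<le> Cb" and Ch: "0 \<le> Ch"
  shows "\<bar>((dm * a + da * m - dh) * n - (m * a - hh) * dn) / (n * n) + c * dm\<bar>
     \<le> m * ((Cc * Tb + Cb + Ch) / n1 + (Tb + Ch) * Cc / (n1 * n1) + \<bar>c\<bar> * Cc)"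
proof -
  have n: "0 < n" using n1 nn by linarith
  have X1: "\<bar>dm * a\<bar> \<le> (Cc * m) * Tb" unfolding abs_mult using adm aa Cc m by (intro mult_mono) simp_all
  have X2: "\<bar>da * m\<bar> \<le> Cb * m" unfolding abs_mult using ada m by (intro mult_mono) simp_all
  have X: "\<bar>dm * a + da * m - dh\<bar> \<le> m * (Cc * Tb + Cb + Ch)"
  proof -
    have "\<bar>dm * a + da * m - dh\<bar> \<le> \<bar>dm * a\<bar> + \<bar>da * m\<bar> + \<bar>dh\<bar>" by linarith
    also have "\<dots> \<le> (Cc * m) * Tb + Cb * m + Ch * m" using X1 X2 adh by linarith
    also have "\<dots> = m * (Cc * Tb + Cb + Ch)" by (simp add: algebra_simps)
    finally show ?thesis .
  qed
  have Y1: "\<bar>m * a\<bar> \<le> m * Tb" unfolding abs_mult using m aa by (intro mult_mono) simp_all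
  have Y: "\<bar>m * a - hh\<bar> \<le> m * (Tb + Ch)"
  proof -
    have "\<bar>m * a - hh\<bar> \<le> \<bar>m * a\<bar> + \<bar>hh\<bar>" by linarith
    also have "\<dots> \<le> m * Tb + Ch * m" using Y1 ahh by linarith
    also have "\<dots> = m * (Tb + Ch)" by (simp add: algebra_simps)
    finally show ?thesis .
  qed
  have Y2: "\<bar>(m * a - hh) * dn\<bar> \<le> m * (Tb + Ch) * Cc" unfolding abs_mult using Y adn Cc m Tb Ch
    by (intro mult_mono) simp_all
  have A: "\<bar>(dm * a + da * m - dh) / n\<bar> \<le> m * (Cc * Tb + Cb + Ch) / n1"
  proof -
    have "\<bar>(dm * a + da * m - dh) / n\<bar> = \<bar>dm * a + da * m - dh\<bar> / n" using n by (simp add: abs_divide)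
    also have "\<dots> \<le> \<bar>dm * a + da * m - dh\<bar> / n1" using n1 nn by (intro divide_left_mono) simp_all
    also have "\<dots> \<le> m * (Cc * Tb + Cb + Ch) / n1" using X n1 by (intro divide_right_mono) simp_all
    finally show ?thesis .
  qed
  have nn2: "n1 * n1 \<le> n * n" using n1 nn by (intro mult_mono) simp_all
  have B: "\<bar>(m * a - hh) * dn / (n * n)\<bar> \<le> m * (Tb + Ch) * Cc / (n1 * n1)"
  proof -
    have "\<bar>(m * a - hh) * dn / (n * n)\<bar> = \<bar>(m * a - hh) * dn\<bar> / (n * n)" using n by (simp add: abs_divide)
    also have "\<dots> \<le> \<bar>(m * a - hh) * dn\<bar> / (n1 * n1)" using n1 nn2 n by (intro divide_left_mono) simp_all
    also have "\<dots> \<le> m * (Tb + Ch) * Cc / (n1 * n1)" using Y2 n1 by (intro divide_right_mono) simp_all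
    finally show ?thesis .
  qed
  have C3: "\<bar>c * dm\<bar> \<le> \<bar>c\<bar> * (Cc * m)" unfolding abs_mult using adm by (intro mult_left_mono) simp_all
  have eq: "((dm * a + da * m - dh) * n - (m * a - hh) * dn) / (n * n) + c * dm
      = (dm * a + da * m - dh) / n - (m * a - hh) * dn / (n * n) + c * dm"
    using n by (simp add: diff_divide_distrib)
  have "\<bar>(dm * a + da * m - dh) / n - (m * a - hh) * dn / (n * n) + c * dm\<bar>
      \<le> m * (Cc * Tb + Cb + Ch) / n1 + m * (Tb + Ch) * Cc / (n1 * n1) + \<bar>c\<bar> * (Cc * m)"
    using A B C3 by linarith
  also have "\<dots> = m * ((Cc * Tb + Cb + Ch) / n1 + (Tb + Ch) * Cc / (n1 * n1) + \<bar>c\<bar> * Cc)"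
    by (simp add: algebra_simps)
  finally show ?thesis unfolding eq .
qed
locale setting =
  fixes M :: "real^'d::finite \<Rightarrow> real"
    and gradM :: "real^'d \<Rightarrow> real^'d"
    and DgradM :: "real^'d \<Rightarrow> real^'d \<Rightarrow> real^'d"
    and \<sigma> :: "real^'d \<Rightarrow> real^'d \<Rightarrow> real"
    and D\<sigma> :: "real^'d \<Rightarrow> real^'d \<Rightarrow> real^'d \<Rightarrow> real"
    and C \<nu>1 \<nu>2 :: real
  assumes M_pos: "\<And>v. M v > 0"
    and M_even: "\<And>v. M (- v) = M v"
    and M_int: "integrable lborel M" 
    and M_int1: "(\<integral>v. M v \<partial>lborel) = 1"
    and M_grad: "\<And>v. (M has_derivative (\<lambda>h. gradM v \<bullet> h)) (at v)"
    and M_grad_bound: "\<And>v. norm (gradM v) \<le> C * M v / (1 + norm v)"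
    and M_hess: "\<And>v. (gradM has_derivative DgradM v) (at v)"
    and M_hess_bound: "\<And>v. onorm (DgradM v) \<le> C * M v"
    and sigma_sym: "\<And>v v'. \<sigma> v v' = \<sigma> v' v"
    and nu1pos: "0 < \<nu>1"
    and sigma_bounds: "\<And>v v'. \<nu>1 \<le> \<sigma> v v' \<and> \<sigma> v v' \<le> \<nu>2"
    and sigma_grad: "\<And>v' v. ((\<lambda>u. \<sigma> v' u) has_derivative D\<sigma> v' v) (at v)"
    and sigma_grad_bound: "\<And>v' v. onorm (D\<sigma> v' v) \<le> C / (1 + norm v)"
begin

lemma C_nonneg: "0 \<le> C"
proof -
  have "0 \<le> C * M 0 / (1 + norm (0::real^'d))" using M_grad_bound[of 0] norm_ge_zero order_trans by blast
  then show ?thesis using M_pos[of 0] by (simp add: zero_le_mult_iff)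
qed

lemma div1_le: "0 \<le> c \<Longrightarrow> c / (1 + norm (x::'a::real_normed_vector)) \<le> c"
proof -
  have "0 < 1 + norm x" using norm_ge_zero[of x] by linarith
  then show "0 \<le> c \<Longrightarrow> c / (1 + norm x) \<le> c" using divide_left_mono[of 1 "1 + norm x" c] by simp
qed

lemma nu12: "\<nu>1 \<le> \<nu>2" using sigma_bounds[of 0 0] by auto

lemma sig_lip: "\<bar>\<sigma> a b - \<sigma> a b'\<bar> \<le> C * norm (b - b')"
proof -
  have "norm ((\<lambda>u. \<sigma> a u) b - (\<lambda>u. \<sigma> a u) b') \<le> C * norm (b - b')"
  proof (rule differentiable_bound[where S=UNIV and f'="D\<sigma> a"])
    show "\<And>x. x \<in> UNIV \<Longrightarrow> ((\<lambda>u. \<sigma> a u) has_derivative D\<sigma> a x) (at x within UNIV)"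
      using sigma_grad by simp
    show "\<And>x. x \<in> UNIV \<Longrightarrow> onorm (D\<sigma> a x) \<le> C"
    proof -
      fix x :: "real^'d"
      have "C / (1 + norm x) \<le> C" by (rule div1_le[OF C_nonneg])
      then show "onorm (D\<sigma> a x) \<le> C" using sigma_grad_bound[of a x] by linarith
    qed
  qed auto
  then show ?thesis by simp
qed

lemma sig_lip2: "\<bar>\<sigma> a b - \<sigma> a' b'\<bar> \<le> C * norm (a - a') + C * norm (b - b')"
proof -
  have "\<bar>\<sigma> a b - \<sigma> a' b\<bar> \<le> C * norm (a - a')" using sig_lip[of b a a'] by (simp add: sigma_sym)
  moreover have "\<bar>\<sigma> a' b - \<sigma> a' b'\<bar> \<le> C * norm (b - b')" by (rule sig_lip)
  ultimately show ?thesis by linarith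
qed

lemma sig_cont: "continuous_on UNIV (\<lambda>p. \<sigma> (fst p) (snd p))"
proof (rule continuous_at_imp_continuous_on, safe)
  fix p :: "(real^'d) \<times> (real^'d)"
  show "isCont (\<lambda>p. \<sigma> (fst p) (snd p)) p"
  proof (rule continuous_at_eps_delta[THEN iffD2], safe)
    fix e :: real assume e: "e > 0"
    show "\<exists>d>0. \<forall>x'. dist x' p < d \<longrightarrow> dist (\<sigma> (fst x') (snd x')) (\<sigma> (fst p) (snd p)) < e"
    proof (intro exI[of _ "e / (2 * C + 1)"] conjI allI impI)
      show "0 < e / (2 * C + 1)" using e C_nonneg by simp
      fix x' assume d: "dist x' p < e / (2 * C + 1)"
      have n1: "norm (fst x' - fst p) \<le> dist x' p" and n2: "norm (snd x' - snd p) \<le> dist x' p"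
        by (simp_all add: dist_norm[symmetric] dist_fst_le dist_snd_le)
      have "dist (\<sigma> (fst x') (snd x')) (\<sigma> (fst p) (snd p)) \<le> C * norm (fst x' - fst p) + C * norm (snd x' - snd p)"
        using sig_lip2 by (simp add: dist_real_def)
      also have "\<dots> \<le> 2 * C * dist x' p"
      proof -
        have "C * norm (fst x' - fst p) \<le> C * dist x' p" using n1 C_nonneg by (rule mult_left_mono)
        moreover have "C * norm (snd x' - snd p) \<le> C * dist x' p" using n2 C_nonneg by (rule mult_left_mono)
        ultimately show ?thesis by linarith
      qed
      also have "\<dots> < e"
      proof -
        have "(2*C+1) * dist x' p < e" using d C_nonneg by (simp add: field_simps)
        moreover have "2 * C * dist x' p \<le> (2*C+1) * dist x' p" by (simp add: mult_right_mono)
        ultimately show ?thesis by linarith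
      qed
      finally show "dist (\<sigma> (fst x') (snd x')) (\<sigma> (fst p) (snd p)) < e" .
    qed
  qed
qed

lemma sig_meas_pair: "(\<lambda>p. \<sigma> (fst p) (snd p)) \<in> borel_measurable (lborel \<Otimes>\<^sub>M lborel)"
proof -
  have "(\<lambda>p. \<sigma> (fst p) (snd p)) \<in> borel_measurable borel"
    by (rule borel_measurable_continuous_onI[OF sig_cont])
  then show ?thesis unfolding lborel_prod by (simp add: measurable_lborel1)
qed

lemma sig_meas[measurable (raw)]:
  assumes [measurable]: "f \<in> N \<rightarrow>\<^sub>M lborel" "g \<in> N \<rightarrow>\<^sub>M lborel"
  shows "(\<lambda>x. \<sigma> (f x) (g x)) \<in> borel_measurable N"
proof -
  have "(\<lambda>x. (f x, g x)) \<in> N \<rightarrow>\<^sub>M lborel \<Otimes>\<^sub>M lborel" by measurable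
  from measurable_comp[OF this sig_meas_pair] show ?thesis by (simp add: comp_def)
qed

lemma M_cont: "continuous_on UNIV M"
  using M_grad has_derivative_continuous continuous_at_imp_continuous_on by blast

lemma M_meas[measurable]: "M \<in> borel_measurable lborel"
  using borel_measurable_continuous_onI[OF M_cont] by (simp add: measurable_lborel1)

lemma gradM_meas[measurable]: "gradM \<in> borel_measurable lborel"
proof -
  have "continuous_on UNIV gradM"
    using M_hess has_derivative_continuous continuous_at_imp_continuous_on by blast
  then show ?thesis using borel_measurable_continuous_onI by (simp add: measurable_lborel1)
qed


lemma int_dom:
  fixes f g :: "real^'d \<Rightarrow> real"
  assumes "integrable lborel f" "g \<in> borel_measurable lborel" "\<And>x. \<bar>g x\<bar> \<le> f x"
  shows "integrable lborel g"
  apply (rule Bochner_Integration.integrable_bound[OF assms(1,2)])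
  using assms(3) by (auto intro!: AE_I2 order_trans[OF _ abs_ge_self])

lemma int_domM:
  fixes g :: "real^'d \<Rightarrow> real"
  assumes "g \<in> borel_measurable lborel" "\<And>x. \<bar>g x\<bar> \<le> K * M x"
  shows "integrable lborel g"
proof (rule int_dom[OF _ assms(1)])
  show "integrable lborel (\<lambda>x. K * M x)" using M_int by simp
  show "\<And>x. \<bar>g x\<bar> \<le> K * M x" by (rule assms(2))
qed

lemma sig_int:
  assumes "integrable lborel \<phi>"
  shows "integrable lborel (\<lambda>v'. \<sigma> v' v * \<phi> v')"
proof (rule int_dom[of "\<lambda>v'. \<nu>2 * \<bar>\<phi> v'\<bar>"])
  show "integrable lborel (\<lambda>v'. \<nu>2 * \<bar>\<phi> v'\<bar>)" using assms by auto
  show "(\<lambda>v'. \<sigma> v' v * \<phi> v') \<in> borel_measurable lborel" using assms by measurable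
  fix x
  have "\<bar>\<sigma> x v\<bar> \<le> \<nu>2" using sigma_bounds[of x v] nu1pos by auto
  then show "\<bar>\<sigma> x v * \<phi> x\<bar> \<le> \<nu>2 * \<bar>\<phi> x\<bar>" by (simp add: abs_mult mult_right_mono)
qed

definition nu where "nu v = (\<integral>v'. \<sigma> v' v * M v' \<partial>lborel)"

lemma nu_bounds: "\<nu>1 \<le> nu v" "nu v \<le> \<nu>2"
proof -
  have i: "integrable lborel (\<lambda>v'. \<sigma> v' v * M v')" by (rule sig_int[OF M_int])
  have "\<nu>1 = (\<integral>v'. \<nu>1 * M v' \<partial>lborel)" using M_int1 by simp
  also have "\<dots> \<le> nu v" unfolding nu_def
    using M_int i sigma_bounds M_pos by (intro integral_mono) (auto intro: mult_right_mono less_imp_le)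
  finally show "\<nu>1 \<le> nu v" .
  have "nu v \<le> (\<integral>v'. \<nu>2 * M v' \<partial>lborel)" unfolding nu_def
    using M_int i sigma_bounds M_pos by (intro integral_mono) (auto intro: mult_right_mono less_imp_le)
  also have "\<dots> = \<nu>2" using M_int1 by simp
  finally show "nu v \<le> \<nu>2" .
qed

lemma nu_pos: "0 < nu v" using nu_bounds(1)[of v] nu1pos by linarith

lemma nu_meas[measurable]: "nu \<in> borel_measurable lborel"
  unfolding nu_def[abs_def] by measurable

lemma nu_sym: "nu v = (\<integral>v'. \<sigma> v v' * M v' \<partial>lborel)"
  unfolding nu_def by (simp add: sigma_sym)

lemma deriv_int:
  assumes \<phi>: "integrable lborel \<phi>"
  shows "((\<lambda>t. \<integral>v'. \<sigma> v' (v + t *\<^sub>R e) * \<phi> v' \<partial>lborel) has_real_derivative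
            (\<integral>v'. D\<sigma> v' v e * \<phi> v' \<partial>lborel)) (at 0)"
    and "\<bar>\<integral>v'. D\<sigma> v' v e * \<phi> v' \<partial>lborel\<bar> \<le> C * norm e * (\<integral>v'. \<bar>\<phi> v'\<bar> \<partial>lborel)"
proof -
  have [measurable]: "\<phi> \<in> borel_measurable lborel" using \<phi> by auto
  have lin: "bounded_linear (D\<sigma> v' v)" for v' using sigma_grad has_derivative_bounded_linear by blast
  have Dbound: "\<bar>D\<sigma> v' v e\<bar> \<le> C * norm e" for v'
  proof -
    have "\<bar>D\<sigma> v' v e\<bar> \<le> onorm (D\<sigma> v' v) * norm e" using onorm[OF lin[of v'], of e] by simp
    also have "\<dots> \<le> C * norm e"
      using sigma_grad_bound[of v' v] div1_le[OF C_nonneg, of v] by (intro mult_right_mono) auto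
    finally show ?thesis .
  qed
  have dq: "((\<lambda>t. (\<sigma> v' (v + t *\<^sub>R e) - \<sigma> v' v) / t) \<longlongrightarrow> D\<sigma> v' v e) (at 0)" for v'
  proof -
    have "((\<lambda>t. v + t *\<^sub>R e) has_derivative (\<lambda>t. t *\<^sub>R e)) (at 0)"
      by (auto intro!: derivative_eq_intros)
    from diff_chain_at[OF this, of "\<lambda>u. \<sigma> v' u" "D\<sigma> v' v"] sigma_grad[of v' v]
    have "((\<lambda>t. \<sigma> v' (v + t *\<^sub>R e)) has_derivative (\<lambda>t. D\<sigma> v' v (t *\<^sub>R e))) (at 0)"
      by (simp add: comp_def)
    then have "((\<lambda>t. \<sigma> v' (v + t *\<^sub>R e)) has_real_derivative D\<sigma> v' v e) (at 0)"
      by (rule has_derivative_imp_has_field_derivative) (simp add: linear_simps(5)[OF lin])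
    then show ?thesis unfolding has_field_derivative_iff by simp
  qed
  have int_shift: "integrable lborel (\<lambda>v'. \<sigma> v' u * \<phi> v')" for u by (rule sig_int[OF \<phi>])
  let ?G = "\<lambda>t. \<integral>v'. \<sigma> v' (v + t *\<^sub>R e) * \<phi> v' \<partial>lborel"
  let ?D = "\<lambda>v'. D\<sigma> v' v e * \<phi> v'"
  have main: "(\<lambda>i. (?G (X i) - ?G 0) / (X i - 0)) \<longlonglongrightarrow> integral\<^sup>L lborel ?D
            \<and> integrable lborel ?D"
    if X: "\<And>i. X i \<noteq> 0" "X \<longlonglongrightarrow> 0" for X :: "nat \<Rightarrow> real"
  proof -
    define s where "s i v' = (\<sigma> v' (v + X i *\<^sub>R e) * \<phi> v' - \<sigma> v' v * \<phi> v') / X i" for i v'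
    have s_eq: "(?G (X i) - ?G 0) / (X i - 0) = integral\<^sup>L lborel (s i)" for i
      unfolding s_def using int_shift by (simp add: integral_diff)
    have lim: "(\<lambda>i. s i v') \<longlonglongrightarrow> ?D v'" for v'
    proof -
      have fX: "filterlim X (at 0) sequentially"
        using X by (intro filterlim_atI) auto
      have "(\<lambda>i. (\<sigma> v' (v + X i *\<^sub>R e) - \<sigma> v' v) / X i) \<longlonglongrightarrow> D\<sigma> v' v e"
        using filterlim_compose[OF dq[of v'] fX] by (simp add: comp_def)
      then have "(\<lambda>i. (\<sigma> v' (v + X i *\<^sub>R e) - \<sigma> v' v) / X i * \<phi> v') \<longlonglongrightarrow> ?D v'"
        by (intro tendsto_intros)
      then show ?thesis unfolding s_def by (simp add: left_diff_distrib)
    qed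
    have s_meas[measurable]: "s i \<in> borel_measurable lborel" for i unfolding s_def by measurable
    have D_meas: "?D \<in> borel_measurable lborel"
      by (rule borel_measurable_LIMSEQ_metric[OF s_meas lim])
    have bnd: "norm (s i v') \<le> C * norm e * \<bar>\<phi> v'\<bar>" for i v'
    proof -
      have "\<bar>\<sigma> v' (v + X i *\<^sub>R e) - \<sigma> v' v\<bar> \<le> C * (\<bar>X i\<bar> * norm e)"
        using sig_lip[of v' "v + X i *\<^sub>R e" v] by simp
      then have "\<bar>\<sigma> v' (v + X i *\<^sub>R e) - \<sigma> v' v\<bar> / \<bar>X i\<bar> \<le> C * norm e"
        using X(1)[of i] by (simp add: divide_le_eq mult_ac)
      then have "\<bar>\<sigma> v' (v + X i *\<^sub>R e) - \<sigma> v' v\<bar> / \<bar>X i\<bar> * \<bar>\<phi> v'\<bar> \<le> C * norm e * \<bar>\<phi> v'\<bar>"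
        by (rule mult_right_mono) simp
      moreover have "norm (s i v') = \<bar>\<sigma> v' (v + X i *\<^sub>R e) - \<sigma> v' v\<bar> / \<bar>X i\<bar> * \<bar>\<phi> v'\<bar>"
        unfolding s_def by (simp add: left_diff_distrib[symmetric] abs_mult abs_divide)
      ultimately show ?thesis by simp
    qed
    have wint: "integrable lborel (\<lambda>v'. C * norm e * \<bar>\<phi> v'\<bar>)" using \<phi> by auto
    have dc: "integrable lborel ?D" "(\<lambda>i. integral\<^sup>L lborel (s i)) \<longlonglongrightarrow> integral\<^sup>L lborel ?D"
      using integrable_dominated_convergence[where s=s, OF D_meas s_meas wint]
        integral_dominated_convergence[where s=s, OF D_meas s_meas wint] lim bnd by auto
    show ?thesis unfolding s_eq using dc by auto
  qed
  show "(?G has_real_derivative integral\<^sup>L lborel ?D) (at 0)"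
    unfolding has_field_derivative_iff tendsto_at_iff_sequentially
    using main by (auto simp: comp_def)
  have intD: "integrable lborel ?D"
  proof -
    have l: "(\<lambda>i. 1 / (real i + 1)) \<longlonglongrightarrow> 0"
      using LIMSEQ_inverse_real_of_nat by (simp add: inverse_eq_divide add.commute)
    show ?thesis using main[of "\<lambda>i. 1 / (real i + 1)", OF _ l] by simp
  qed
  show "\<bar>integral\<^sup>L lborel ?D\<bar> \<le> C * norm e * (\<integral>v'. \<bar>\<phi> v'\<bar> \<partial>lborel)"
  proof -
    have "\<bar>integral\<^sup>L lborel ?D\<bar> \<le> (\<integral>v'. C * norm e * \<bar>\<phi> v'\<bar> \<partial>lborel)"
      using intD \<phi> Dbound
      by (intro integral_abs_bound_integral) (auto simp: abs_mult intro!: mult_right_mono)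
    then show ?thesis by simp
  qed
qed


lemma prod_int:
  fixes f g :: "real^'d \<Rightarrow> real"
  assumes f: "integrable lborel f" and g: "integrable lborel g"
  shows "integrable (lborel \<Otimes>\<^sub>M lborel) (\<lambda>p. f (fst p) * g (snd p))"
proof (rule lborel_pair.Fubini_integrable)
  have [measurable]: "f \<in> borel_measurable lborel" "g \<in> borel_measurable lborel" using f g by auto
  show "(\<lambda>p. f (fst p) * g (snd p)) \<in> borel_measurable (lborel \<Otimes>\<^sub>M lborel)" by measurable
  have "integrable lborel (\<lambda>x. \<bar>f x\<bar> * (\<integral>y. \<bar>g y\<bar> \<partial>lborel))" using f by auto
  then show "integrable lborel (\<lambda>x. \<integral>y. norm (f (fst (x, y)) * g (snd (x, y))) \<partial>lborel)"
    by (simp add: abs_mult)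
  show "AE x in lborel. integrable lborel (\<lambda>y. f (fst (x, y)) * g (snd (x, y)))"
    using g by auto
qed

lemma int_dom2:
  fixes F :: "(real^'d) \<times> (real^'d) \<Rightarrow> real"
  assumes "integrable lborel f" "integrable lborel g" "F \<in> borel_measurable (lborel \<Otimes>\<^sub>M lborel)"
    "\<And>x y. \<bar>F (x, y)\<bar> \<le> f x * g y"
  shows "integrable (lborel \<Otimes>\<^sub>M lborel) F"
  apply (rule Bochner_Integration.integrable_bound[OF prod_int[OF assms(1,2)] assms(3)])
  using assms(4) by (auto intro!: AE_I2 order_trans[OF _ abs_ge_self])

definition phi where "phi z v = M v * z v / nu v"
definition T where "T z v = (\<integral>v'. \<sigma> v' v * phi z v' \<partial>lborel)"
definition good where "good z \<longleftrightarrow> z \<in> borel_measurable lborel \<and> integrable lborel (\<lambda>v. z v * M v)"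

lemma phi_abs: "\<bar>phi z v\<bar> \<le> \<bar>z v * M v\<bar> / \<nu>1"
proof -
  have "\<bar>phi z v\<bar> = \<bar>z v * M v\<bar> / nu v" unfolding phi_def using nu_pos[of v] by (simp add: abs_mult abs_divide mult_ac)
  also have "\<dots> \<le> \<bar>z v * M v\<bar> / \<nu>1" using nu_bounds(1)[of v] nu1pos by (intro divide_left_mono) auto
  finally show ?thesis .
qed

lemma phi_meas[measurable]: assumes [measurable]: "z \<in> borel_measurable lborel" shows "phi z \<in> borel_measurable lborel"
  unfolding phi_def[abs_def] by measurable

lemma phi_int: assumes "good z" shows "integrable lborel (phi z)"
proof -
  have [measurable]: "z \<in> borel_measurable lborel" using assms unfolding good_def by auto
  have i: "integrable lborel (\<lambda>v. z v * M v)" using assms unfolding good_def by auto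
  show ?thesis
  proof (rule int_dom[of "\<lambda>v. \<bar>z v * M v\<bar> / \<nu>1"])
    show "integrable lborel (\<lambda>v. \<bar>z v * M v\<bar> / \<nu>1)" using i by auto
    show "phi z \<in> borel_measurable lborel" by measurable
    show "\<And>x. \<bar>phi z x\<bar> \<le> \<bar>z x * M x\<bar> / \<nu>1" by (rule phi_abs)
  qed
qed

lemma phi_abs_int: assumes "good z" shows "(\<integral>v. \<bar>phi z v\<bar> \<partial>lborel) \<le> (\<integral>v. \<bar>z v * M v\<bar> \<partial>lborel) / \<nu>1"
proof -
  have "(\<integral>v. \<bar>phi z v\<bar> \<partial>lborel) \<le> (\<integral>v. \<bar>z v * M v\<bar> / \<nu>1 \<partial>lborel)"
    using assms phi_int[OF assms] unfolding good_def by (intro integral_mono) (auto intro: phi_abs)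
  then show ?thesis by simp
qed

lemma phi_nu: "nu v * phi z v = z v * M v"
  unfolding phi_def using nu_pos[of v] by simp

lemma T_bound: assumes "good z" shows "\<bar>T z v\<bar> \<le> \<nu>2 / \<nu>1 * (\<integral>v. \<bar>z v * M v\<bar> \<partial>lborel)"
proof -
  have "\<bar>T z v\<bar> \<le> (\<integral>v'. \<nu>2 * \<bar>phi z v'\<bar> \<partial>lborel)" unfolding T_def
  proof (rule integral_abs_bound_integral)
    show "integrable lborel (\<lambda>v'. \<sigma> v' v * phi z v')" by (rule sig_int[OF phi_int[OF assms]])
    show "integrable lborel (\<lambda>v'. \<nu>2 * \<bar>phi z v'\<bar>)" using phi_int[OF assms] by auto
    fix x
    have "\<bar>\<sigma> x v\<bar> \<le> \<nu>2" using sigma_bounds[of x v] nu1pos by auto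
    then show "\<bar>\<sigma> x v * phi z x\<bar> \<le> \<nu>2 * \<bar>phi z x\<bar>" by (simp add: abs_mult mult_right_mono)
  qed
  also have "\<dots> = \<nu>2 * (\<integral>v'. \<bar>phi z v'\<bar> \<partial>lborel)" by simp
  also have "\<dots> \<le> \<nu>2 * ((\<integral>v. \<bar>z v * M v\<bar> \<partial>lborel) / \<nu>1)"
    using phi_abs_int[OF assms] nu1pos nu12 by (intro mult_left_mono) auto
  finally show ?thesis by simp
qed

lemma T_meas[measurable]: assumes [measurable]: "z \<in> borel_measurable lborel" shows "T z \<in> borel_measurable lborel"
  unfolding T_def[abs_def] by measurable

lemma T_good: assumes "good z" shows "good (T z)"
proof -
  have [measurable]: "z \<in> borel_measurable lborel" using assms unfolding good_def by auto
  have "integrable lborel (\<lambda>v. T z v * M v)"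
  proof (rule int_dom[of "\<lambda>v. (\<nu>2 / \<nu>1 * (\<integral>v. \<bar>z v * M v\<bar> \<partial>lborel)) * M v"])
    show "integrable lborel (\<lambda>v. (\<nu>2 / \<nu>1 * (\<integral>v. \<bar>z v * M v\<bar> \<partial>lborel)) * M v)" using M_int by auto
    show "(\<lambda>v. T z v * M v) \<in> borel_measurable lborel" by measurable
    fix x show "\<bar>T z x * M x\<bar> \<le> \<nu>2 / \<nu>1 * (\<integral>v. \<bar>z v * M v\<bar> \<partial>lborel) * M x"
      using mult_right_mono[OF T_bound[OF assms, of x] less_imp_le[OF M_pos[of x]]] M_pos[of x] by (simp add: abs_mult)
  qed
  then show ?thesis unfolding good_def by simp
qed

lemma T_mass: assumes "good z" shows "(\<integral>v. T z v * M v \<partial>lborel) = (\<integral>v. z v * M v \<partial>lborel)"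
proof -
  have [measurable]: "z \<in> borel_measurable lborel" using assms unfolding good_def by auto
  have pint: "integrable lborel (phi z)" by (rule phi_int[OF assms])
  define F where "F x y = phi z y * (\<sigma> y x * M x)" for x y
  have Fint: "integrable (lborel \<Otimes>\<^sub>M lborel) (case_prod F)"
  proof (rule int_dom2[of "\<lambda>x. \<nu>2 * M x" "\<lambda>y. \<bar>phi z y\<bar>"])
    show "integrable lborel (\<lambda>x. \<nu>2 * M x)" using M_int by auto
    show "integrable lborel (\<lambda>y. \<bar>phi z y\<bar>)" using pint by auto
    show "case_prod F \<in> borel_measurable (lborel \<Otimes>\<^sub>M lborel)" unfolding F_def by measurable
    fix x y
    have "\<bar>\<sigma> y x\<bar> \<le> \<nu>2" using sigma_bounds[of y x] nu1pos by auto
    then have "\<bar>\<sigma> y x\<bar> * M x \<le> \<nu>2 * M x" using M_pos[of x] by (simp add: mult_right_mono less_imp_le)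
    then have "\<bar>phi z y\<bar> * (\<bar>\<sigma> y x\<bar> * M x) \<le> \<bar>phi z y\<bar> * (\<nu>2 * M x)" by (simp add: mult_left_mono)
    then show "\<bar>case_prod F (x, y)\<bar> \<le> \<nu>2 * M x * \<bar>phi z y\<bar>"
      unfolding F_def using M_pos[of x] by (simp add: abs_mult mult_ac)
  qed
  have "(\<integral>v. T z v * M v \<partial>lborel) = (\<integral>x. (\<integral>y. F x y \<partial>lborel) \<partial>lborel)"
    unfolding T_def F_def
    by (rule Bochner_Integration.integral_cong[OF refl]) (simp add: mult_ac flip: integral_mult_left_zero)
  also have "\<dots> = (\<integral>y. (\<integral>x. F x y \<partial>lborel) \<partial>lborel)"
    using lborel_pair.Fubini_integral[OF Fint] by simp
  also have "\<dots> = (\<integral>y. phi z y * nu y \<partial>lborel)"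
    unfolding F_def nu_sym by simp
  also have "\<dots> = (\<integral>v. z v * M v \<partial>lborel)"
    using phi_nu by (simp add: mult.commute)
  finally show ?thesis .
qed

lemma nu_good: "good nu"
  unfolding good_def
proof
  show "nu \<in> borel_measurable lborel" by measurable
  show "integrable lborel (\<lambda>v. nu v * M v)"
  proof (rule int_dom[of "\<lambda>v. \<nu>2 * M v"])
    show "integrable lborel (\<lambda>v. \<nu>2 * M v)" using M_int by auto
    show "(\<lambda>v. nu v * M v) \<in> borel_measurable lborel" by measurable
    fix x show "\<bar>nu x * M x\<bar> \<le> \<nu>2 * M x"
      using nu_bounds[of x] nu_pos[of x] M_pos[of x] by (simp add: abs_mult mult_right_mono less_imp_le)
  qed
qed

lemma T_nu: "T nu v = nu v"
proof -
  have "nu v' \<noteq> 0" for v' using nu_pos[of v'] by linarith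
  then show ?thesis unfolding T_def phi_def nu_def[of v] by simp
qed

lemma good_lin: "good z1 \<Longrightarrow> good z2 \<Longrightarrow> good (\<lambda>v. z1 v + c * z2 v)"
  unfolding good_def by (auto simp: distrib_right mult.assoc)

lemma good_abs: assumes "good z" shows "integrable lborel (\<lambda>v. \<bar>z v\<bar> * M v)"
proof -
  have "integrable lborel (\<lambda>v. \<bar>z v * M v\<bar>)" using assms unfolding good_def by auto
  moreover have "(\<lambda>v. \<bar>z v * M v\<bar>) = (\<lambda>v. \<bar>z v\<bar> * M v)"
    by (simp add: abs_mult fun_eq_iff abs_of_pos[OF M_pos])
  ultimately show ?thesis by simp
qed

lemma T_lin: assumes "good z1" "good z2" shows "T (\<lambda>v. z1 v + c * z2 v) v = T z1 v + c * T z2 v"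
proof -
  have "phi (\<lambda>v. z1 v + c * z2 v) = (\<lambda>v. phi z1 v + c * phi z2 v)"
    unfolding phi_def by (simp add: fun_eq_iff distrib_left add_divide_distrib)
  moreover have "(\<lambda>v'. \<sigma> v' v * (phi z1 v' + c * phi z2 v')) = (\<lambda>v'. \<sigma> v' v * phi z1 v' + c * (\<sigma> v' v * phi z2 v'))"
    by (simp add: fun_eq_iff algebra_simps)
  ultimately have "T (\<lambda>v. z1 v + c * z2 v) v = (\<integral>v'. \<sigma> v' v * phi z1 v' + c * (\<sigma> v' v * phi z2 v') \<partial>lborel)"
    unfolding T_def by simp
  also have "\<dots> = (\<integral>v'. \<sigma> v' v * phi z1 v' \<partial>lborel) + (\<integral>v'. c * (\<sigma> v' v * phi z2 v') \<partial>lborel)"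
    using sig_int[OF phi_int[OF assms(1)]] sig_int[OF phi_int[OF assms(2)]]
    by (intro Bochner_Integration.integral_add) auto
  also have "\<dots> = T z1 v + c * T z2 v" unfolding T_def by simp
  finally show ?thesis .
qed


lemma T_contr:
  assumes g: "good z" and m0: "(\<integral>v. z v * M v \<partial>lborel) = 0"
  shows "(\<integral>v. \<bar>T z v\<bar> * M v \<partial>lborel) \<le> (1 - \<nu>1 / \<nu>2) * (\<integral>v. \<bar>z v\<bar> * M v \<partial>lborel)"
proof -
  have [measurable]: "z \<in> borel_measurable lborel" using g unfolding good_def by auto
  have zM: "integrable lborel (\<lambda>v. z v * M v)" using g unfolding good_def by auto
  have pint: "integrable lborel (phi z)" by (rule phi_int[OF g])
  define \<epsilon> where "\<epsilon> = \<nu>1 / \<nu>2"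
  have \<nu>2pos: "0 < \<nu>2" using nu1pos nu12 by linarith
  have eps_nn: "0 \<le> \<epsilon>" unfolding \<epsilon>_def using nu1pos \<nu>2pos by simp
  define a where "a x y = \<sigma> y x - \<epsilon> * nu y" for x y
  have a_nn: "0 \<le> a x y" for x y
  proof -
    have "\<epsilon> * nu y \<le> \<epsilon> * \<nu>2" using nu_bounds(2)[of y] eps_nn by (rule mult_left_mono)
    also have "\<dots> = \<nu>1" unfolding \<epsilon>_def using \<nu>2pos by simp
    finally show ?thesis unfolding a_def using sigma_bounds[of y x] by linarith
  qed
  have a_le: "a x y \<le> \<nu>2" for x y
  proof -
    have "0 \<le> \<epsilon> * nu y" using nu_pos[of y] eps_nn by simp
    then show ?thesis unfolding a_def using sigma_bounds[of y x] by linarith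
  qed
  have [measurable]: "(\<lambda>p. a (fst p) (snd p)) \<in> borel_measurable (lborel \<Otimes>\<^sub>M lborel)"
    unfolding a_def by measurable
  have [measurable]: "a x \<in> borel_measurable lborel" for x unfolding a_def by measurable
  have [measurable]: "(\<lambda>x. a x y) \<in> borel_measurable lborel" for y unfolding a_def by measurable
  have aphi_int: "integrable lborel (\<lambda>y. a x y * \<bar>phi z y\<bar>)" for x
  proof (rule int_dom[of "\<lambda>y. \<nu>2 * \<bar>phi z y\<bar>"])
    show "integrable lborel (\<lambda>y. \<nu>2 * \<bar>phi z y\<bar>)" using pint by auto
    show "(\<lambda>y. a x y * \<bar>phi z y\<bar>) \<in> borel_measurable lborel" by measurable
    fix y show "\<bar>a x y * \<bar>phi z y\<bar>\<bar> \<le> \<nu>2 * \<bar>phi z y\<bar>"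
      using a_nn[of x y] a_le[of x y] by (simp add: abs_mult mult_right_mono)
  qed
  have Teq: "T z x = (\<integral>y. a x y * phi z y \<partial>lborel)" for x
  proof -
    have i1: "integrable lborel (\<lambda>y. \<sigma> y x * phi z y)" by (rule sig_int[OF pint])
    have e: "(\<lambda>y. \<epsilon> * nu y * phi z y) = (\<lambda>y. \<epsilon> * (z y * M y))"
      using phi_nu by (simp add: fun_eq_iff mult.assoc)
    have i2: "integrable lborel (\<lambda>y. \<epsilon> * nu y * phi z y)" unfolding e using zM by auto
    have "(\<integral>y. a x y * phi z y \<partial>lborel) = (\<integral>y. \<sigma> y x * phi z y - \<epsilon> * nu y * phi z y \<partial>lborel)"
      unfolding a_def by (simp add: left_diff_distrib)
    also have "\<dots> = T z x - (\<integral>y. \<epsilon> * nu y * phi z y \<partial>lborel)"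
      unfolding T_def using i1 i2 by (rule Bochner_Integration.integral_diff)
    also have "(\<integral>y. \<epsilon> * nu y * phi z y \<partial>lborel) = 0" unfolding e using m0 by simp
    finally show ?thesis by simp
  qed
  define G where "G x = (\<integral>y. a x y * \<bar>phi z y\<bar> \<partial>lborel)" for x
  have G_meas[measurable]: "G \<in> borel_measurable lborel" unfolding G_def by measurable
  have TG: "\<bar>T z x\<bar> \<le> G x" for x
    unfolding Teq G_def
  proof (rule integral_abs_bound_integral[OF _ aphi_int])
    show "integrable lborel (\<lambda>y. a x y * phi z y)"
    proof (rule int_dom[OF aphi_int[of x]])
      show "(\<lambda>y. a x y * phi z y) \<in> borel_measurable lborel" by measurable
      show "\<And>y. \<bar>a x y * phi z y\<bar> \<le> a x y * \<bar>phi z y\<bar>" using a_nn by (simp add: abs_mult)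
    qed
    show "\<And>y. \<bar>a x y * phi z y\<bar> \<le> a x y * \<bar>phi z y\<bar>" using a_nn by (simp add: abs_mult)
  qed
  have G_le: "G x \<le> \<nu>2 * (\<integral>y. \<bar>phi z y\<bar> \<partial>lborel)" for x
  proof -
    have "G x \<le> (\<integral>y. \<nu>2 * \<bar>phi z y\<bar> \<partial>lborel)" unfolding G_def
      using aphi_int pint a_le by (intro integral_mono) (auto intro: mult_right_mono)
    then show ?thesis by simp
  qed
  have GM_int: "integrable lborel (\<lambda>x. G x * M x)"
  proof (rule int_dom[of "\<lambda>x. (\<nu>2 * (\<integral>y. \<bar>phi z y\<bar> \<partial>lborel)) * M x"])
    show "integrable lborel (\<lambda>x. (\<nu>2 * (\<integral>y. \<bar>phi z y\<bar> \<partial>lborel)) * M x)" using M_int by auto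
    show "(\<lambda>x. G x * M x) \<in> borel_measurable lborel" by measurable
    fix x
    have "0 \<le> G x" using TG[of x] by linarith
    then show "\<bar>G x * M x\<bar> \<le> \<nu>2 * (\<integral>y. \<bar>phi z y\<bar> \<partial>lborel) * M x"
      using G_le[of x] M_pos[of x] by (simp add: abs_mult mult_right_mono less_imp_le)
  qed
  have TM_int: "integrable lborel (\<lambda>x. \<bar>T z x\<bar> * M x)"
  proof -
    have "integrable lborel (\<lambda>x. \<bar>T z x * M x\<bar>)" using T_good[OF g] unfolding good_def by auto
    moreover have "(\<lambda>x. \<bar>T z x * M x\<bar>) = (\<lambda>x. \<bar>T z x\<bar> * M x)"
      by (simp add: abs_mult fun_eq_iff abs_of_pos[OF M_pos])
    ultimately show ?thesis by simp
  qed
  define F where "F x y = \<bar>phi z y\<bar> * (a x y * M x)" for x y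
  have Fint: "integrable (lborel \<Otimes>\<^sub>M lborel) (case_prod F)"
  proof (rule int_dom2[of "\<lambda>x. \<nu>2 * M x" "\<lambda>y. \<bar>phi z y\<bar>"])
    show "integrable lborel (\<lambda>x. \<nu>2 * M x)" using M_int by auto
    show "integrable lborel (\<lambda>y. \<bar>phi z y\<bar>)" using pint by auto
    show "case_prod F \<in> borel_measurable (lborel \<Otimes>\<^sub>M lborel)" unfolding F_def by measurable
    fix x y
    have "a x y * M x \<le> \<nu>2 * M x" using a_le[of x y] M_pos[of x] by (simp add: mult_right_mono less_imp_le)
    then have "\<bar>phi z y\<bar> * (a x y * M x) \<le> \<bar>phi z y\<bar> * (\<nu>2 * M x)" by (simp add: mult_left_mono)
    then show "\<bar>case_prod F (x, y)\<bar> \<le> \<nu>2 * M x * \<bar>phi z y\<bar>"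
      unfolding F_def using M_pos[of x] a_nn[of x y] by (simp add: abs_mult mult_ac)
  qed
  have inner: "(\<integral>x. F x y \<partial>lborel) = \<bar>phi z y\<bar> * ((1 - \<epsilon>) * nu y)" for y
  proof -
    have "(\<integral>x. a x y * M x \<partial>lborel) = (\<integral>x. \<sigma> y x * M x - \<epsilon> * nu y * M x \<partial>lborel)"
      unfolding a_def by (simp add: left_diff_distrib)
    also have "\<dots> = (\<integral>x. \<sigma> y x * M x \<partial>lborel) - (\<integral>x. \<epsilon> * nu y * M x \<partial>lborel)"
      using sig_int[OF M_int, of y] M_int by (intro Bochner_Integration.integral_diff) (auto simp: sigma_sym)
    also have "\<dots> = nu y - \<epsilon> * nu y" using M_int1 nu_sym[of y] by simp
    finally have A: "(\<integral>x. a x y * M x \<partial>lborel) = (1 - \<epsilon>) * nu y" by (simp add: algebra_simps)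
    have "(\<integral>x. F x y \<partial>lborel) = \<bar>phi z y\<bar> * (\<integral>x. a x y * M x \<partial>lborel)"
      unfolding F_def by (rule integral_mult_right_zero)
    then show ?thesis using A by simp
  qed
  have "(\<integral>v. \<bar>T z v\<bar> * M v \<partial>lborel) \<le> (\<integral>x. G x * M x \<partial>lborel)"
    using TM_int GM_int TG M_pos by (intro integral_mono) (auto intro: mult_right_mono less_imp_le)
  also have "\<dots> = (\<integral>x. (\<integral>y. F x y \<partial>lborel) \<partial>lborel)"
    unfolding G_def F_def
    by (rule Bochner_Integration.integral_cong[OF refl]) (simp add: mult_ac flip: integral_mult_left_zero)
  also have "\<dots> = (\<integral>y. (\<integral>x. F x y \<partial>lborel) \<partial>lborel)"
    using lborel_pair.Fubini_integral[OF Fint] by simp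
  also have "\<dots> = (\<integral>y. (1 - \<epsilon>) * (\<bar>z y\<bar> * M y) \<partial>lborel)"
  proof (rule Bochner_Integration.integral_cong[OF refl])
    fix y
    have "\<bar>phi z y\<bar> * nu y = \<bar>z y\<bar> * M y"
      using phi_nu[of y z] nu_pos[of y] M_pos[of y]
      by (metis abs_mult abs_of_pos mult.commute)
    then show "(\<integral>x. F x y \<partial>lborel) = (1 - \<epsilon>) * (\<bar>z y\<bar> * M y)"
      unfolding inner by (metis mult.commute mult.left_commute)
  qed
  also have "\<dots> = (1 - \<nu>1 / \<nu>2) * (\<integral>v. \<bar>z v\<bar> * M v \<partial>lborel)" unfolding \<epsilon>_def by simp
  finally show ?thesis .
qed


lemma M_dir: "((\<lambda>t. M (v + t *\<^sub>R e)) has_real_derivative (gradM v \<bullet> e)) (at 0)"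
proof -
  have "((\<lambda>t. v + t *\<^sub>R e) has_derivative (\<lambda>t. t *\<^sub>R e)) (at 0)"
    by (auto intro!: derivative_eq_intros)
  moreover have "(M has_derivative (\<lambda>h. gradM v \<bullet> h)) (at ((\<lambda>t. v + t *\<^sub>R e) 0))"
    using M_grad[of v] by simp
  ultimately have "((M \<circ> (\<lambda>t. v + t *\<^sub>R e)) has_derivative ((\<lambda>h. gradM v \<bullet> h) \<circ> (\<lambda>t. t *\<^sub>R e))) (at 0)"
    by (rule diff_chain_at)
  then have "((\<lambda>t. M (v + t *\<^sub>R e)) has_derivative (\<lambda>t. gradM v \<bullet> (t *\<^sub>R e))) (at 0)"
    by (simp add: comp_def)
  then show ?thesis by (rule has_derivative_imp_has_field_derivative) (simp add: inner_scaleR_right)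
qed

lemma M_dir_bound: "\<bar>gradM v \<bullet> e\<bar> \<le> C * M v * norm e"
proof -
  have "\<bar>gradM v \<bullet> e\<bar> \<le> norm (gradM v) * norm e" by (rule Cauchy_Schwarz_ineq2)
  also have "\<dots> \<le> C * M v * norm e"
  proof (rule mult_right_mono)
    have "C * M v / (1 + norm v) \<le> C * M v"
      using div1_le[of "C * M v" v] C_nonneg M_pos[of v] by simp
    then show "norm (gradM v) \<le> C * M v" using M_grad_bound[of v] by linarith
  qed simp
  finally show ?thesis .
qed

lemma exist_scalar:
  fixes h :: "real^'d \<Rightarrow> real" and Ch :: real
  assumes h_meas[measurable]: "h \<in> borel_measurable lborel"
    and h_bound: "\<And>v. \<bar>h v\<bar> \<le> Ch * M v"
    and h_int0: "(\<integral>v. h v \<partial>lborel) = 0"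
    and h_deriv: "\<And>v i. \<exists>p. ((\<lambda>t. h (v + t *\<^sub>R axis i 1)) has_real_derivative p) (at 0) \<and> \<bar>p\<bar> \<le> Ch * M v"
  shows "\<exists>f. f \<in> borel_measurable lborel \<and> integrable lborel f \<and> (\<integral>v. f v \<partial>lborel) = 0
          \<and> (\<forall>v. Qop \<sigma> M f v = h v)
          \<and> (\<exists>K. \<forall>v. \<bar>f v\<bar> \<le> K * M v \<and> (\<forall>i. \<exists>p. ((\<lambda>t. f (v + t *\<^sub>R axis i 1)) has_real_derivative p) (at 0)
                 \<and> \<bar>p\<bar> \<le> K * M v))"
proof -
  have Ch: "0 \<le> Ch"
  proof -
    have "0 \<le> Ch * M 0" using h_bound[of 0] abs_ge_zero order_trans by blast
    then show ?thesis using M_pos[of 0] by (simp add: zero_le_mult_iff)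
  qed
  have hint: "integrable lborel h" by (rule int_domM[OF h_meas h_bound])
  define q where "q v = h v / M v" for v
  have q_meas[measurable]: "q \<in> borel_measurable lborel" unfolding q_def by measurable
  have qM: "q v * M v = h v" for v unfolding q_def using M_pos[of v] by simp
  have q_bound: "\<bar>q v\<bar> \<le> Ch" for v
    using h_bound[of v] M_pos[of v] unfolding q_def by (simp add: abs_divide divide_le_eq)
  define e where "e n = (T ^^ n) (\<lambda>v. - q v)" for n
  have e0: "e 0 = (\<lambda>v. - q v)" unfolding e_def by simp
  have eS: "e (Suc n) = T (e n)" for n unfolding e_def by simp
  define r where "r = 1 - \<nu>1 / \<nu>2"
  define Q0 where "Q0 = (\<integral>v. \<bar>q v\<bar> * M v \<partial>lborel)"
  have \<nu>2pos: "0 < \<nu>2" using nu1pos nu12 by linarith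
  have r_nn: "0 \<le> r" and r_lt: "r < 1" unfolding r_def using nu1pos \<nu>2pos nu12 by (auto simp: field_simps)
  have absM: "\<bar>z * M v\<bar> = \<bar>z\<bar> * M v" for z v using M_pos[of v] by (simp add: abs_mult)
  have inv: "good (e n) \<and> (\<integral>v. e n v * M v \<partial>lborel) = 0 \<and> (\<integral>v. \<bar>e n v\<bar> * M v \<partial>lborel) \<le> r ^ n * Q0" for n
  proof (induction n)
    case 0
    have "good (\<lambda>v. - q v)" unfolding good_def using hint by (simp add: qM)
    moreover have "(\<integral>v. - q v * M v \<partial>lborel) = 0" using h_int0 by (simp add: qM)
    ultimately show ?case unfolding e0 Q0_def by simp
  next
    case (Suc n)
    then have g: "good (e n)" and m0: "(\<integral>v. e n v * M v \<partial>lborel) = 0" by auto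
    have "(\<integral>v. \<bar>e (Suc n) v\<bar> * M v \<partial>lborel) \<le> r * (\<integral>v. \<bar>e n v\<bar> * M v \<partial>lborel)"
      unfolding eS r_def by (rule T_contr[OF g m0])
    also have "\<dots> \<le> r * (r ^ n * Q0)" using Suc r_nn by (intro mult_left_mono) auto
    finally show ?case using T_good[OF g] T_mass[OF g] m0 unfolding eS by simp
  qed
  have e_good: "good (e n)" for n using inv by auto
  have e_meas[measurable]: "e n \<in> borel_measurable lborel" for n using e_good unfolding good_def by auto
  define B where "B = \<nu>2 / \<nu>1 * Q0"
  have Q0_nn: "0 \<le> Q0" unfolding Q0_def
  proof (rule integral_nonneg_AE, rule AE_I2)
    fix v show "0 \<le> \<bar>q v\<bar> * M v" using M_pos[of v] by simp
  qed
  have B_nn: "0 \<le> B" unfolding B_def using nu1pos \<nu>2pos Q0_nn by simp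
  have eS_bound: "\<bar>e (Suc n) v\<bar> \<le> B * r ^ n" for n v
  proof -
    have "\<bar>e (Suc n) v\<bar> \<le> \<nu>2 / \<nu>1 * (\<integral>v. \<bar>e n v * M v\<bar> \<partial>lborel)" unfolding eS by (rule T_bound[OF e_good])
    also have "(\<integral>v. \<bar>e n v * M v\<bar> \<partial>lborel) = (\<integral>v. \<bar>e n v\<bar> * M v \<partial>lborel)" by (simp only: absM)
    also have "\<nu>2 / \<nu>1 * (\<integral>v. \<bar>e n v\<bar> * M v \<partial>lborel) \<le> \<nu>2 / \<nu>1 * (r ^ n * Q0)"
    proof (rule mult_left_mono)
      show "(\<integral>v. \<bar>e n v\<bar> * M v \<partial>lborel) \<le> r ^ n * Q0" using inv[of n] by blast
      show "0 \<le> \<nu>2 / \<nu>1" using nu1pos \<nu>2pos by simp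
    qed
    finally show ?thesis unfolding B_def by (simp add: mult_ac)
  qed
  have geo: "summable (\<lambda>n. B * r ^ n)"
    by (rule summable_mult[OF summable_geometric]) (use r_nn r_lt in simp)
  have sumS: "summable (\<lambda>n. \<bar>e (Suc n) v\<bar>)" for v
  proof (rule summable_comparison_test'[OF geo, where N=0])
    fix n :: nat show "norm \<bar>e (Suc n) v\<bar> \<le> B * r ^ n" using eS_bound[of n v] by simp
  qed
  have sumA: "summable (\<lambda>n. \<bar>e n v\<bar>)" for v
    using sumS[of v] summable_Suc_iff[of "\<lambda>n. \<bar>e n v\<bar>"] by simp
  have sum: "summable (\<lambda>n. e n v)" for v by (rule summable_rabs_cancel[OF sumA])
  define w where "w v = (\<Sum>n. e n v)" for v
  have w_meas[measurable]: "w \<in> borel_measurable lborel" unfolding w_def[abs_def] by measurable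
  define Wb where "Wb = Ch + B / (1 - r)"
  have w_split: "w v = - q v + (\<Sum>n. e (Suc n) v)" for v
    using suminf_split_head[OF sum[of v]] unfolding w_def e0 by simp
  have w_bound: "\<bar>w v\<bar> \<le> Wb" for v
  proof -
    have "\<bar>\<Sum>n. e (Suc n) v\<bar> \<le> (\<Sum>n. \<bar>e (Suc n) v\<bar>)" by (rule summable_rabs[OF sumS])
    also have "\<dots> \<le> (\<Sum>n. B * r ^ n)" by (rule suminf_le[OF _ sumS geo]) (rule eS_bound)
    also have "\<dots> = B / (1 - r)" using r_nn r_lt suminf_geometric[of r] by (simp add: suminf_mult)
    finally show ?thesis unfolding w_split Wb_def using q_bound[of v] by linarith
  qed
  have Wb_nn: "0 \<le> Wb" using w_bound[of 0] by linarith
  have w_good: "good w"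
  proof -
    have "integrable lborel (\<lambda>v. w v * M v)"
    proof (rule int_domM)
      show "(\<lambda>v. w v * M v) \<in> borel_measurable lborel" by measurable
      fix v show "\<bar>w v * M v\<bar> \<le> Wb * M v"
        unfolding absM using w_bound[of v] M_pos[of v] by (intro mult_right_mono) auto
    qed
    then show ?thesis unfolding good_def by simp
  qed
  have Tw: "T w v = w v + q v" for v
  proof -
    define F where "F n v' = \<sigma> v' v * phi (e n) v'" for n v'
    have F_int: "integrable lborel (F n)" for n unfolding F_def by (rule sig_int[OF phi_int[OF e_good]])
    have F_bound: "\<bar>F n v'\<bar> \<le> \<nu>2 / \<nu>1 * M v' * \<bar>e n v'\<bar>" for n v'
    proof -
      have s: "\<bar>\<sigma> v' v\<bar> \<le> \<nu>2" using sigma_bounds[of v' v] nu1pos by auto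
      have "\<bar>F n v'\<bar> = \<bar>\<sigma> v' v\<bar> * \<bar>phi (e n) v'\<bar>" unfolding F_def by (rule abs_mult)
      also have "\<dots> \<le> \<nu>2 * (\<bar>e n v' * M v'\<bar> / \<nu>1)"
        by (rule mult_mono[OF s phi_abs]) (use \<nu>2pos in auto)
      also have "\<dots> = \<nu>2 / \<nu>1 * M v' * \<bar>e n v'\<bar>" unfolding absM by simp
      finally show ?thesis .
    qed
    have s1: "AE v' in lborel. summable (\<lambda>n. norm (F n v'))"
    proof (intro AE_I2)
      fix v'
      have "summable (\<lambda>n. \<nu>2 / \<nu>1 * M v' * \<bar>e n v'\<bar>)" using sumA by (intro summable_mult)
      then show "summable (\<lambda>n. norm (F n v'))" by (rule summable_comparison_test') (use F_bound in auto)
    qed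
    have s2: "summable (\<lambda>n. \<integral>v'. norm (F n v') \<partial>lborel)"
    proof (rule summable_comparison_test'[of "\<lambda>n. \<nu>2 / \<nu>1 * (r ^ n * Q0)"])
      show "summable (\<lambda>n. \<nu>2 / \<nu>1 * (r ^ n * Q0))"
        by (rule summable_mult[OF summable_mult2[OF summable_geometric]]) (use r_nn r_lt in simp)
      fix n
      have "(\<integral>v'. norm (F n v') \<partial>lborel) \<le> (\<integral>v'. \<nu>2 / \<nu>1 * (\<bar>e n v'\<bar> * M v') \<partial>lborel)"
      proof (rule integral_mono)
        show "integrable lborel (\<lambda>v'. norm (F n v'))" using F_int[of n] by simp
        show "integrable lborel (\<lambda>v'. \<nu>2 / \<nu>1 * (\<bar>e n v'\<bar> * M v'))"
          using good_abs[OF e_good[of n]] by simp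
        fix v' show "norm (F n v') \<le> \<nu>2 / \<nu>1 * (\<bar>e n v'\<bar> * M v')"
          using F_bound[of n v'] by (simp add: mult_ac)
      qed
      also have "\<dots> = \<nu>2 / \<nu>1 * (\<integral>v'. \<bar>e n v'\<bar> * M v' \<partial>lborel)" by simp
      also have "\<dots> \<le> \<nu>2 / \<nu>1 * (r ^ n * Q0)" using inv[of n] nu1pos \<nu>2pos by (intro mult_left_mono) auto
      finally show "norm (\<integral>v'. norm (F n v') \<partial>lborel) \<le> \<nu>2 / \<nu>1 * (r ^ n * Q0)"
        by (simp add: integral_nonneg_AE)
    qed
    have Feq: "\<sigma> v' v * phi w v' = (\<Sum>n. F n v')" for v'
    proof -
      have "phi w v' = (\<Sum>n. phi (e n) v')"
        unfolding phi_def w_def using sum[of v'] by (simp add: suminf_mult suminf_divide)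
      moreover have sp: "summable (\<lambda>n. phi (e n) v')"
        unfolding phi_def using sum[of v'] by (intro summable_divide summable_mult)
      ultimately show ?thesis unfolding F_def using suminf_mult[OF sp, of "\<sigma> v' v"] by simp
    qed
    have "T w v = (\<integral>v'. (\<Sum>n. F n v') \<partial>lborel)" unfolding T_def Feq ..
    also have "\<dots> = (\<Sum>n. integral\<^sup>L lborel (F n))" by (rule integral_suminf[OF F_int s1 s2])
    also have "\<dots> = (\<Sum>n. e (Suc n) v)" unfolding F_def eS T_def ..
    also have "\<dots> = w v + q v" using w_split[of v] by simp
    finally show ?thesis .
  qed
  define c where "c = - (\<integral>v. phi w v \<partial>lborel)"
  define f where "f v = phi w v + c * M v" for v
  have pw_int: "integrable lborel (phi w)" by (rule phi_int[OF w_good])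
  have f_meas: "f \<in> borel_measurable lborel" unfolding f_def[abs_def] by measurable
  have f_int: "integrable lborel f" unfolding f_def[abs_def] using pw_int M_int by auto
  have f_int0: "(\<integral>v. f v \<partial>lborel) = 0" unfolding f_def using pw_int M_int M_int1
    by (simp add: c_def)
  have f_alt: "f u = (M u * T w u - h u) / nu u + c * M u" for u
  proof -
    have "phi w u = (M u * T w u - h u) / nu u"
      unfolding phi_def Tw using qM[of u] by (simp add: algebra_simps)
    then show ?thesis unfolding f_def by simp
  qed
  have Q_f: "Qop \<sigma> M f v = h v" for v
  proof -
    have i1: "integrable lborel (\<lambda>v'. \<sigma> v' v * f v')" by (rule sig_int[OF f_int])
    have i2: "integrable lborel (\<lambda>v'. \<sigma> v' v * M v')" by (rule sig_int[OF M_int])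
    have K: "(\<integral>v'. \<sigma> v' v * f v' \<partial>lborel) = T w v + c * nu v"
    proof -
      have "(\<integral>v'. \<sigma> v' v * f v' \<partial>lborel) = (\<integral>v'. \<sigma> v' v * phi w v' + c * (\<sigma> v' v * M v') \<partial>lborel)"
        unfolding f_def by (simp add: algebra_simps)
      also have "\<dots> = (\<integral>v'. \<sigma> v' v * phi w v' \<partial>lborel) + (\<integral>v'. c * (\<sigma> v' v * M v') \<partial>lborel)"
        using sig_int[OF pw_int] i2 by (intro Bochner_Integration.integral_add) auto
      also have "\<dots> = T w v + c * nu v" unfolding T_def nu_def by simp
      finally show ?thesis .
    qed
    have "Qop \<sigma> M f v = (\<integral>v'. M v * (\<sigma> v' v * f v') - f v * (\<sigma> v' v * M v') \<partial>lborel)"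
      unfolding Qop_def by (simp add: sigma_sym[of v] algebra_simps)
    also have "\<dots> = M v * (\<integral>v'. \<sigma> v' v * f v' \<partial>lborel) - f v * nu v"
      using i1 i2 unfolding nu_def by (subst Bochner_Integration.integral_diff) auto
    also have "\<dots> = M v * (T w v + c * nu v) - (phi w v + c * M v) * nu v" unfolding K by (simp add: f_def)
    also have "\<dots> = M v * T w v - w v * M v" using phi_nu[of v w] by (simp add: algebra_simps)
    also have "\<dots> = h v" unfolding Tw using qM[of v] by (simp add: algebra_simps)
    finally show ?thesis .
  qed
  define Tb where "Tb = \<nu>2 / \<nu>1 * (\<integral>v. \<bar>w v * M v\<bar> \<partial>lborel)"
  define Cb where "Cb = C * (\<integral>v'. \<bar>phi w v'\<bar> \<partial>lborel)"
  have Tb: "\<bar>T w v\<bar> \<le> Tb" for v unfolding Tb_def by (rule T_bound[OF w_good])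
  have Tb_nn: "0 \<le> Tb" using Tb[of 0] by linarith
  have Cb_nn: "0 \<le> Cb" unfolding Cb_def using C_nonneg by (simp add: integral_nonneg_AE)
  define K where "K = (Wb / \<nu>1 + \<bar>c\<bar>) + ((C * Tb + Cb + Ch) / \<nu>1 + (Tb + Ch) * C / (\<nu>1 * \<nu>1) + \<bar>c\<bar> * C)"
  have K2_nn: "0 \<le> (C * Tb + Cb + Ch) / \<nu>1 + (Tb + Ch) * C / (\<nu>1 * \<nu>1) + \<bar>c\<bar> * C"
    using C_nonneg Tb_nn Cb_nn Ch nu1pos by (intro add_nonneg_nonneg mult_nonneg_nonneg divide_nonneg_pos) auto
  have K1_nn: "0 \<le> Wb / \<nu>1 + \<bar>c\<bar>" using Wb_nn nu1pos by simp
  have f_bound: "\<bar>f v\<bar> \<le> K * M v" for v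
  proof -
    have "\<bar>phi w v\<bar> \<le> \<bar>w v * M v\<bar> / \<nu>1" by (rule phi_abs)
    also have "\<dots> \<le> Wb * M v / \<nu>1" using w_bound[of v] M_pos[of v] nu1pos
      by (intro divide_right_mono) (auto simp: absM intro: mult_right_mono)
    finally have pb: "\<bar>phi w v\<bar> \<le> Wb * M v / \<nu>1" .
    have "\<bar>f v\<bar> \<le> \<bar>phi w v\<bar> + \<bar>c\<bar> * M v"
      unfolding f_def using abs_triangle_ineq[of "phi w v" "c * M v"] M_pos[of v] by (simp add: abs_mult)
    then have "\<bar>f v\<bar> \<le> Wb * M v / \<nu>1 + \<bar>c\<bar> * M v" using pb by linarith
    also have "\<dots> = (Wb / \<nu>1 + \<bar>c\<bar>) * M v" by (simp add: algebra_simps)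
    also have "\<dots> \<le> K * M v" unfolding K_def using K2_nn M_pos[of v] by (intro mult_right_mono) auto
    finally show ?thesis .
  qed
  have f_deriv: "\<exists>p. ((\<lambda>t. f (v + t *\<^sub>R axis i 1)) has_real_derivative p) (at 0) \<and> \<bar>p\<bar> \<le> K * M v" for v i
  proof -
    define ee :: "real^'d" where "ee = axis i 1"
    obtain dh where dh: "((\<lambda>t. h (v + t *\<^sub>R ee)) has_real_derivative dh) (at 0)" "\<bar>dh\<bar> \<le> Ch * M v"
      using h_deriv[of v i] unfolding ee_def by blast
    have dM: "((\<lambda>t. M (v + t *\<^sub>R ee)) has_real_derivative (gradM v \<bullet> ee)) (at 0)" by (rule M_dir)
    have dT: "((\<lambda>t. T w (v + t *\<^sub>R ee)) has_real_derivative (\<integral>v'. D\<sigma> v' v ee * phi w v' \<partial>lborel)) (at 0)"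
      unfolding T_def by (rule deriv_int(1)[OF pw_int])
    have dn: "((\<lambda>t. nu (v + t *\<^sub>R ee)) has_real_derivative (\<integral>v'. D\<sigma> v' v ee * M v' \<partial>lborel)) (at 0)"
      unfolding nu_def by (rule deriv_int(1)[OF M_int])
    have dTb: "\<bar>\<integral>v'. D\<sigma> v' v ee * phi w v' \<partial>lborel\<bar> \<le> Cb"
      using deriv_int(2)[OF pw_int, of v ee] unfolding Cb_def ee_def by simp
    have dnb: "\<bar>\<integral>v'. D\<sigma> v' v ee * M v' \<partial>lborel\<bar> \<le> C"
      using deriv_int(2)[OF M_int, of v ee] M_pos unfolding ee_def by (simp add: abs_of_pos M_int1)
    have dMb: "\<bar>gradM v \<bullet> ee\<bar> \<le> C * M v" using M_dir_bound[of v ee] unfolding ee_def by simp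
    let ?dm = "gradM v \<bullet> ee" and ?da = "\<integral>v'. D\<sigma> v' v ee * phi w v' \<partial>lborel"
      and ?dn = "\<integral>v'. D\<sigma> v' v ee * M v' \<partial>lborel"
    have D: "((\<lambda>t. (M (v + t *\<^sub>R ee) * T w (v + t *\<^sub>R ee) - h (v + t *\<^sub>R ee)) / nu (v + t *\<^sub>R ee)
               + c * M (v + t *\<^sub>R ee)) has_real_derivative
             ((?dm * T w v + ?da * M v - dh) * nu v - (M v * T w v - h v) * ?dn) / (nu v * nu v) + c * ?dm) (at 0)"
    proof -
      have num: "((\<lambda>t. M (v + t *\<^sub>R ee) * T w (v + t *\<^sub>R ee) - h (v + t *\<^sub>R ee)) has_real_derivative
          (?dm * T w v + ?da * M v - dh)) (at 0)"
        using DERIV_diff[OF DERIV_mult[OF dM dT] dh(1)] by simp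
      have nz: "nu (v + 0 *\<^sub>R ee) \<noteq> 0" using nu_pos[of v] by simp
      have quot: "((\<lambda>t. (M (v + t *\<^sub>R ee) * T w (v + t *\<^sub>R ee) - h (v + t *\<^sub>R ee)) / nu (v + t *\<^sub>R ee))
          has_real_derivative ((?dm * T w v + ?da * M v - dh) * nu v - (M v * T w v - h v) * ?dn) / (nu v * nu v)) (at 0)"
        using DERIV_divide[OF num dn nz] by simp
      show ?thesis using DERIV_add[OF quot DERIV_cmult[OF dM, of c]] by simp
    qed
    have fe: "(\<lambda>t. f (v + t *\<^sub>R ee)) = (\<lambda>t. (M (v + t *\<^sub>R ee) * T w (v + t *\<^sub>R ee) - h (v + t *\<^sub>R ee)) / nu (v + t *\<^sub>R ee)
               + c * M (v + t *\<^sub>R ee))"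
      using f_alt by auto
    have b: "\<bar>((?dm * T w v + ?da * M v - dh) * nu v - (M v * T w v - h v) * ?dn) / (nu v * nu v) + c * ?dm\<bar>
       \<le> M v * ((C * Tb + Cb + Ch) / \<nu>1 + (Tb + Ch) * C / (\<nu>1 * \<nu>1) + \<bar>c\<bar> * C)"
      by (rule deriv_bound_aux[OF M_pos nu1pos nu_bounds(1) dMb Tb dTb dnb h_bound dh(2) C_nonneg Tb_nn Cb_nn Ch])
    also have "\<dots> \<le> K * M v"
    proof -
      have p: "0 \<le> (Wb / \<nu>1 + \<bar>c\<bar>) * M v" using K1_nn M_pos[of v] by simp
      have "K * M v = (Wb / \<nu>1 + \<bar>c\<bar>) * M v + M v * ((C * Tb + Cb + Ch) / \<nu>1 + (Tb + Ch) * C / (\<nu>1 * \<nu>1) + \<bar>c\<bar> * C)"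
        unfolding K_def by (simp add: algebra_simps)
      then show ?thesis using p by linarith
    qed
    finally have bb: "\<bar>((?dm * T w v + ?da * M v - dh) * nu v - (M v * T w v - h v) * ?dn) / (nu v * nu v) + c * ?dm\<bar> \<le> K * M v" .
    show ?thesis unfolding ee_def[symmetric] fe using D bb by blast
  qed
  show ?thesis using f_meas f_int f_int0 Q_f f_bound f_deriv by blast
qed


lemma Q_expand:
  assumes \<phi>: "integrable lborel \<phi>"
  shows "Qop \<sigma> M \<phi> v = M v * (\<integral>v'. \<sigma> v' v * \<phi> v' \<partial>lborel) - \<phi> v * nu v"
proof -
  have i1: "integrable lborel (\<lambda>v'. \<sigma> v' v * \<phi> v')" by (rule sig_int[OF \<phi>])
  have i2: "integrable lborel (\<lambda>v'. \<sigma> v' v * M v')" by (rule sig_int[OF M_int])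
  have "Qop \<sigma> M \<phi> v = (\<integral>v'. M v * (\<sigma> v' v * \<phi> v') - \<phi> v * (\<sigma> v' v * M v') \<partial>lborel)"
    unfolding Qop_def by (simp add: sigma_sym[of v] algebra_simps)
  also have "\<dots> = M v * (\<integral>v'. \<sigma> v' v * \<phi> v' \<partial>lborel) - \<phi> v * nu v"
    using i1 i2 unfolding nu_def by (subst Bochner_Integration.integral_diff) auto
  finally show ?thesis .
qed

lemma sq_bound: "\<bar>x\<bar> \<le> x\<^sup>2 / m + m" if "0 < m" for x m :: real
proof -
  have eq: "x\<^sup>2 + m\<^sup>2 = (\<bar>x\<bar> - m)\<^sup>2 + 2 * (\<bar>x\<bar> * m)"
    by (simp add: power2_eq_square algebra_simps abs_mult_self_eq)
  have a: "0 \<le> (\<bar>x\<bar> - m)\<^sup>2" by simp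
  have b: "0 \<le> \<bar>x\<bar> * m" using that by simp
  have "\<bar>x\<bar> * m \<le> x\<^sup>2 + m\<^sup>2" using eq a b by linarith
  then have "\<bar>x\<bar> \<le> (x\<^sup>2 + m\<^sup>2) / m" using that by (simp add: pos_le_divide_eq)
  also have "\<dots> = x\<^sup>2 / m + m" using that by (simp add: add_divide_distrib power2_eq_square)
  finally show ?thesis .
qed

lemma L2w_int: assumes "L2w M g" shows "integrable lborel g"
proof -
  have [measurable]: "g \<in> borel_measurable lborel" and i: "integrable lborel (\<lambda>v. (g v)\<^sup>2 / M v)"
    using assms unfolding L2w_def by auto
  show ?thesis
  proof (rule int_dom[OF _ _ sq_bound[OF M_pos]])
    show "integrable lborel (\<lambda>x. (g x)\<^sup>2 / M x + M x)" using i M_int by simp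
  qed measurable
qed

lemma unique_scalar:
  assumes f_int: "integrable lborel f" and Qf: "\<And>v. Qop \<sigma> M f v = h v"
    and g: "L2w M g" and Qg: "AE v in lborel. Qop \<sigma> M g v = h v"
    and ints: "(\<integral>v. g v \<partial>lborel) = (\<integral>v. f v \<partial>lborel)"
  shows "AE v in lborel. g v = f v"
proof -
  have g_int: "integrable lborel g" by (rule L2w_int[OF g])
  have [measurable]: "f \<in> borel_measurable lborel" "g \<in> borel_measurable lborel" using f_int g_int by auto
  define \<delta> where "\<delta> v = g v - f v" for v
  have d_int: "integrable lborel \<delta>" unfolding \<delta>_def[abs_def] using f_int g_int by auto
  have d_meas[measurable]: "\<delta> \<in> borel_measurable lborel" unfolding \<delta>_def[abs_def] by measurable
  have d0: "(\<integral>v. \<delta> v \<partial>lborel) = 0" unfolding \<delta>_def using f_int g_int ints by simp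
  define Kd where "Kd v = (\<integral>v'. \<sigma> v' v * \<delta> v' \<partial>lborel)" for v
  have Kd_eq: "Kd v = (\<integral>v'. \<sigma> v' v * g v' \<partial>lborel) - (\<integral>v'. \<sigma> v' v * f v' \<partial>lborel)" for v
    unfolding Kd_def \<delta>_def using sig_int[OF f_int] sig_int[OF g_int]
    by (simp add: right_diff_distrib)
  have AE1: "AE v in lborel. M v * Kd v = \<delta> v * nu v"
    using Qg
  proof (rule eventually_mono)
    fix v assume "Qop \<sigma> M g v = h v"
    then have "Qop \<sigma> M g v = Qop \<sigma> M f v" using Qf[of v] by simp
    then show "M v * Kd v = \<delta> v * nu v"
      unfolding Q_expand[OF g_int] Q_expand[OF f_int] Kd_eq \<delta>_def by (simp add: algebra_simps)
  qed
  define z where "z v = nu v * \<delta> v / M v" for v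
  have z_meas[measurable]: "z \<in> borel_measurable lborel" unfolding z_def[abs_def] by measurable
  have zM: "z v * M v = nu v * \<delta> v" for v unfolding z_def using M_pos[of v] by simp
  have z_good: "good z"
  proof -
    have "integrable lborel (\<lambda>v. nu v * \<delta> v)"
    proof (rule int_dom[of "\<lambda>v. \<nu>2 * \<bar>\<delta> v\<bar>"])
      show "integrable lborel (\<lambda>v. \<nu>2 * \<bar>\<delta> v\<bar>)" using d_int by simp
      show "(\<lambda>v. nu v * \<delta> v) \<in> borel_measurable lborel" by measurable
      fix v show "\<bar>nu v * \<delta> v\<bar> \<le> \<nu>2 * \<bar>\<delta> v\<bar>"
        using nu_bounds[of v] nu_pos[of v] by (simp add: abs_mult mult_right_mono)
    qed
    then show ?thesis unfolding good_def zM by simp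
  qed
  have phiz: "phi z v = \<delta> v" for v
    unfolding phi_def z_def using M_pos[of v] nu_pos[of v] by simp
  have Tz: "T z v = Kd v" for v unfolding T_def phiz Kd_def ..
  have AE2: "AE v in lborel. z v = T z v"
    using AE1
  proof (rule eventually_mono)
    fix v assume "M v * Kd v = \<delta> v * nu v"
    then show "z v = T z v" unfolding Tz z_def using M_pos[of v] by (simp add: field_simps)
  qed
  have nM_int: "integrable lborel (\<lambda>v. nu v * M v)" using nu_good unfolding good_def by simp
  have nM_pos: "0 < (\<integral>v. nu v * M v \<partial>lborel)"
  proof -
    have "(\<integral>v. \<nu>1 * M v \<partial>lborel) \<le> (\<integral>v. nu v * M v \<partial>lborel)"
      using M_int nM_int nu_bounds M_pos by (intro integral_mono) (auto intro: mult_right_mono less_imp_le)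
    then show ?thesis using M_int1 nu1pos by simp
  qed
  define cc where "cc = (\<integral>v. z v * M v \<partial>lborel) / (\<integral>v. nu v * M v \<partial>lborel)"
  define y where "y v = z v + (- cc) * nu v" for v
  have y_good: "good y" unfolding y_def by (rule good_lin[OF z_good nu_good])
  have y_meas[measurable]: "y \<in> borel_measurable lborel" using y_good unfolding good_def by simp
  have zM_int: "integrable lborel (\<lambda>v. z v * M v)" using z_good unfolding good_def by simp
  have y0: "(\<integral>v. y v * M v \<partial>lborel) = 0"
  proof -
    have "(\<integral>v. y v * M v \<partial>lborel) = (\<integral>v. z v * M v + (- cc) * (nu v * M v) \<partial>lborel)"
      unfolding y_def by (simp add: algebra_simps)
    also have "\<dots> = (\<integral>v. z v * M v \<partial>lborel) + (\<integral>v. (- cc) * (nu v * M v) \<partial>lborel)"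
      using zM_int nM_int by (intro Bochner_Integration.integral_add) auto
    also have "\<dots> = 0" unfolding cc_def using nM_pos by simp
    finally show ?thesis .
  qed
  have Ty: "T y v = T z v + (- cc) * nu v" for v
    unfolding y_def T_lin[OF z_good nu_good] T_nu ..
  have AE3: "AE v in lborel. y v = T y v"
    using AE2 by (rule eventually_mono) (simp add: Ty y_def)
  have Ty_meas[measurable]: "T y \<in> borel_measurable lborel" by measurable
  have "(\<integral>v. \<bar>y v\<bar> * M v \<partial>lborel) = (\<integral>v. \<bar>T y v\<bar> * M v \<partial>lborel)"
    by (rule integral_cong_AE) (use AE3 in \<open>auto elim!: eventually_mono\<close>)
  also have "\<dots> \<le> (1 - \<nu>1 / \<nu>2) * (\<integral>v. \<bar>y v\<bar> * M v \<partial>lborel)" by (rule T_contr[OF y_good y0])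
  finally have le: "(\<integral>v. \<bar>y v\<bar> * M v \<partial>lborel) \<le> (1 - \<nu>1 / \<nu>2) * (\<integral>v. \<bar>y v\<bar> * M v \<partial>lborel)" .
  have nn: "0 \<le> (\<integral>v. \<bar>y v\<bar> * M v \<partial>lborel)"
    by (rule integral_nonneg_AE, rule AE_I2) (simp add: less_imp_le[OF M_pos])
  have \<nu>2pos: "0 < \<nu>2" using nu1pos nu12 by linarith
  have p: "0 < \<nu>1 / \<nu>2" using nu1pos \<nu>2pos by simp
  have "\<nu>1 / \<nu>2 * (\<integral>v. \<bar>y v\<bar> * M v \<partial>lborel) \<le> \<nu>1 / \<nu>2 * 0" using le by (simp add: algebra_simps)
  then have "(\<integral>v. \<bar>y v\<bar> * M v \<partial>lborel) \<le> 0" using mult_le_cancel_left_pos[OF p] by blast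
  then have "(\<integral>v. \<bar>y v\<bar> * M v \<partial>lborel) = 0" using nn by linarith
  then have "AE v in lborel. \<bar>y v\<bar> * M v = 0"
    using integral_nonneg_eq_0_iff_AE[OF good_abs[OF y_good]] by (simp add: less_imp_le[OF M_pos])
  then have AE4: "AE v in lborel. \<delta> v = cc * M v"
  proof (rule eventually_mono)
    fix v assume "\<bar>y v\<bar> * M v = 0"
    then have "y v = 0" using M_pos[of v] by simp
    then have "z v = cc * nu v" unfolding y_def by simp
    then have "nu v * \<delta> v = nu v * (cc * M v)" using zM[of v] by (metis mult.assoc mult.commute)
    then show "\<delta> v = cc * M v" using nu_pos[of v] by simp
  qed
  have "(\<integral>v. \<delta> v \<partial>lborel) = (\<integral>v. cc * M v \<partial>lborel)"
    by (rule integral_cong_AE) (use AE4 in auto)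
  then have "cc = 0" using d0 M_int1 by simp
  then show ?thesis using AE4 unfolding \<delta>_def by simp
qed

end

lemma distr_uminus_lborel: "distr lborel borel uminus = (lborel :: (real^'d::finite) measure)"
proof -
  have "(lborel :: (real^'d) measure) = density (distr lborel borel (\<lambda>x. 0 + (-1::real) *\<^sub>R x)) (\<lambda>_. \<bar>-1::real\<bar> ^ DIM(real^'d))"
    by (rule lborel_affine) simp
  also have "\<dots> = distr lborel borel uminus" by (simp add: density_1)
  finally show ?thesis by simp
qed

lemma integral_reflect:
  fixes f :: "real^'d::finite \<Rightarrow> real"
  assumes [measurable]: "f \<in> borel_measurable borel"
  shows "(\<integral>x. f (- x) \<partial>lborel) = (\<integral>x. f x \<partial>lborel)"
proof -
  have "(\<integral>x. f x \<partial>lborel) = (\<integral>x. f x \<partial>(distr lborel borel uminus))" by (simp add: distr_uminus_lborel)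
  also have "\<dots> = (\<integral>x. f (- x) \<partial>lborel)" by (rule integral_distr) auto
  finally show ?thesis by simp
qed

lemma integrable_vec_comp:
  fixes G :: "real^'d::finite \<Rightarrow> real^'n::finite"
  assumes "\<And>j. integrable lborel (\<lambda>v. G v $ j)"
  shows "integrable lborel G"
proof -
  have "G v = (\<Sum>j\<in>UNIV. (G v $ j) *\<^sub>R axis j 1)" for v
    using basis_expansion[of "G v"] unfolding scalar_mult_eq_scaleR by metis
  then have "G = (\<lambda>v. \<Sum>j\<in>UNIV. (G v $ j) *\<^sub>R axis j 1)" by auto
  moreover have "integrable lborel (\<lambda>v. \<Sum>j\<in>UNIV. (G v $ j) *\<^sub>R axis j (1::real))"
    by (rule Bochner_Integration.integrable_sum, rule Bochner_Integration.integrable_scaleR_left, rule assms)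
  ultimately show ?thesis by simp
qed

lemma integral_vec_comp:
  fixes G :: "real^'d::finite \<Rightarrow> real^'n::finite"
  assumes "integrable lborel G"
  shows "(\<integral>v. G v \<partial>lborel) $ j = (\<integral>v. G v $ j \<partial>lborel)"
  using integral_bounded_linear[OF bounded_linear_vec_nth assms, of j] by simp

theorem lemma2p11:
  fixes M :: "real^'d::finite \<Rightarrow> real"
    and gradM :: "real^'d \<Rightarrow> real^'d"
    and DgradM :: "real^'d \<Rightarrow> real^'d \<Rightarrow> real^'d"
    and \<sigma> :: "real^'d \<Rightarrow> real^'d \<Rightarrow> real"
    and D\<sigma> :: "real^'d \<Rightarrow> real^'d \<Rightarrow> real^'d \<Rightarrow> real"
    and \<alpha> \<gamma> \<nu>0 \<nu>1 \<nu>2 C :: real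
  assumes alpha: "1 \<le> \<alpha>" "\<alpha> < 2"
    and M_pos: "\<And>v. M v > 0"
    and M_even: "\<And>v. M (- v) = M v"
    and M_int: "integrable lborel M" "(\<integral>v. M v \<partial>lborel) = 1"
    and M_tail: "\<gamma> > 0" "((\<lambda>v. norm v powr (real CARD('d) + \<alpha>) * M v) \<longlongrightarrow> \<gamma>) at_infinity"
    and M_grad: "\<And>v. (M has_derivative (\<lambda>h. gradM v \<bullet> h)) (at v)"
    and M_grad_bound: "\<And>v. norm (gradM v) \<le> C * M v / (1 + norm v)"
    and M_hess: "\<And>v. (gradM has_derivative DgradM v) (at v)"
    and M_hess_bound: "\<And>v. onorm (DgradM v) \<le> C * M v"
    and sigma_sym: "\<And>v v'. \<sigma> v v' = \<sigma> v' v"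
    and nu12: "0 < \<nu>1" "\<nu>1 \<le> \<nu>2"
    and sigma_bounds: "\<And>v v'. \<nu>1 \<le> \<sigma> v v' \<and> \<sigma> v v' \<le> \<nu>2"
    and sigma_grad: "\<And>v' v. ((\<lambda>u. \<sigma> v' u) has_derivative D\<sigma> v' v) (at v)"
    and sigma_grad_bound: "\<And>v' v. onorm (D\<sigma> v' v) \<le> C / (1 + norm v)"
    and sigma_nu0: "\<And>v v'. \<bar>\<sigma> v v' - \<nu>0\<bar> \<le> C / (1 + norm v)"
    and nu_even: "\<And>v. (\<integral>v'. \<sigma> v' (- v) * M v' \<partial>lborel) = (\<integral>v'. \<sigma> v' v * M v' \<partial>lborel)"
  shows "\<exists>lam :: real^'d \<Rightarrow> real^'d.
           (\<forall>j. L2w M (\<lambda>v. lam v $ j))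
         \<and> (AE v in lborel. \<forall>j. Qop \<sigma> M (\<lambda>u. lam u $ j) v = gradM v $ j)
         \<and> (\<integral>v. lam v \<partial>lborel) = 0
         \<and> (\<forall>\<mu> :: real^'d \<Rightarrow> real^'d.
               (\<forall>j. L2w M (\<lambda>v. \<mu> v $ j))
             \<and> (AE v in lborel. \<forall>j. Qop \<sigma> M (\<lambda>u. \<mu> u $ j) v = gradM v $ j)
             \<and> (\<integral>v. \<mu> v \<partial>lborel) = 0
             \<longrightarrow> (AE v in lborel. \<mu> v = lam v))
         \<and> (\<exists>C'. \<forall>v. norm (lam v) \<le> C' * M v
                 \<and> (\<forall>i j. \<exists>p. ((\<lambda>t. lam (v + t *\<^sub>R axis i 1) $ j) has_real_derivative p) (at 0)
                             \<and> \<bar>p\<bar> \<le> C' * M v))"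
proof -
  interpret S: setting M gradM DgradM \<sigma> D\<sigma> C \<nu>1 \<nu>2
    by unfold_locales (fact M_pos M_even M_int(1) M_int(2) M_grad M_grad_bound M_hess M_hess_bound
        sigma_sym nu12(1) sigma_bounds sigma_grad sigma_grad_bound)+
  have gradM_cont: "continuous_on UNIV gradM"
    using M_hess has_derivative_continuous continuous_at_imp_continuous_on by blast
  have gradM_borel[measurable]: "gradM \<in> borel_measurable borel"
    by (rule borel_measurable_continuous_onI[OF gradM_cont])
  have gradM_odd: "gradM (- v) = - gradM v" for v
  proof -
    have d1: "(M has_derivative (\<lambda>h. gradM v \<bullet> h)) (at v)" by (rule M_grad)
    have "(uminus has_derivative uminus) (at v)" by (auto intro!: derivative_eq_intros)
    moreover have "(M has_derivative (\<lambda>h. gradM (- v) \<bullet> h)) (at (- v))" by (rule M_grad)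
    ultimately have "((M \<circ> uminus) has_derivative ((\<lambda>h. gradM (- v) \<bullet> h) \<circ> uminus)) (at v)"
      by (rule diff_chain_at)
    moreover have "M \<circ> uminus = M" using M_even by (simp add: fun_eq_iff)
    ultimately have d2: "(M has_derivative (\<lambda>h. gradM (- v) \<bullet> (- h))) (at v)" by (simp add: comp_def)
    have eq: "(\<lambda>h. gradM v \<bullet> h) = (\<lambda>h. gradM (- v) \<bullet> (- h))" by (rule has_derivative_unique[OF d1 d2])
    have "(gradM v + gradM (- v)) \<bullet> h = 0" for h
      using fun_cong[OF eq, of h] by (simp add: inner_add_left)
    from this[of "gradM v + gradM (- v)"] have "gradM v + gradM (- v) = 0" by simp
    then show ?thesis by (simp add: eq_neg_iff_add_eq_0 add.commute)
  qed
  have comp_bound: "\<bar>gradM v $ j\<bar> \<le> C * M v" for v j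
  proof -
    have "\<bar>gradM v $ j\<bar> \<le> norm (gradM v)" by (rule component_le_norm_cart)
    also have "\<dots> \<le> C * M v / (1 + norm v)" by (rule M_grad_bound)
    also have "\<dots> \<le> C * M v" using S.div1_le[of "C * M v" v] S.C_nonneg M_pos[of v] by simp
    finally show ?thesis .
  qed
  have comp_deriv: "\<exists>p. ((\<lambda>t. gradM (v + t *\<^sub>R axis i 1) $ j) has_real_derivative p) (at 0) \<and> \<bar>p\<bar> \<le> C * M v"
    for v i j
  proof -
    define e :: "real^'d" where "e = axis i 1"
    have lin: "bounded_linear (DgradM v)" using M_hess has_derivative_bounded_linear by blast
    have "((\<lambda>t. v + t *\<^sub>R e) has_derivative (\<lambda>t. t *\<^sub>R e)) (at 0)"
      by (auto intro!: derivative_eq_intros)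
    moreover have "(gradM has_derivative DgradM v) (at ((\<lambda>t. v + t *\<^sub>R e) 0))"
      using M_hess[of v] by simp
    ultimately have "((gradM \<circ> (\<lambda>t. v + t *\<^sub>R e)) has_derivative (DgradM v \<circ> (\<lambda>t. t *\<^sub>R e))) (at 0)"
      by (rule diff_chain_at)
    then have "((\<lambda>t. gradM (v + t *\<^sub>R e) $ j) has_derivative (\<lambda>t. (DgradM v (t *\<^sub>R e)) $ j)) (at 0)"
      using bounded_linear.has_derivative[OF bounded_linear_vec_nth] by (simp add: comp_def)
    then have D: "((\<lambda>t. gradM (v + t *\<^sub>R e) $ j) has_real_derivative (DgradM v e $ j)) (at 0)"
      by (rule has_derivative_imp_has_field_derivative) (simp add: linear_simps(5)[OF lin])
    have "\<bar>DgradM v e $ j\<bar> \<le> norm (DgradM v e)" by (rule component_le_norm_cart)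
    also have "\<dots> \<le> onorm (DgradM v) * norm e" by (rule onorm[OF lin])
    also have "\<dots> \<le> C * M v" unfolding e_def using M_hess_bound[of v] by simp
    finally show ?thesis using D unfolding e_def by blast
  qed
  have int0: "(\<integral>v. gradM v $ j \<partial>lborel) = 0" for j
  proof -
    have "(\<integral>v. gradM v $ j \<partial>lborel) = (\<integral>v. gradM (- v) $ j \<partial>lborel)"
    proof (rule integral_reflect[symmetric])
      show "(\<lambda>v. gradM v $ j) \<in> borel_measurable borel"
        by (rule borel_measurable_continuous_onI[OF continuous_on_component[OF gradM_cont]])
    qed
    also have "\<dots> = - (\<integral>v. gradM v $ j \<partial>lborel)" by (simp add: gradM_odd)
    finally show ?thesis by simp
  qed
  have "\<forall>j. \<exists>f. f \<in> borel_measurable lborel \<and> integrable lborel f \<and> (\<integral>v. f v \<partial>lborel) = 0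
          \<and> (\<forall>v. Qop \<sigma> M f v = gradM v $ j)
          \<and> (\<exists>K. \<forall>v. \<bar>f v\<bar> \<le> K * M v \<and> (\<forall>i. \<exists>p. ((\<lambda>t. f (v + t *\<^sub>R axis i 1)) has_real_derivative p) (at 0)
                 \<and> \<bar>p\<bar> \<le> K * M v))"
  proof
    fix j
    show "\<exists>f. f \<in> borel_measurable lborel \<and> integrable lborel f \<and> (\<integral>v. f v \<partial>lborel) = 0
          \<and> (\<forall>v. Qop \<sigma> M f v = gradM v $ j)
          \<and> (\<exists>K. \<forall>v. \<bar>f v\<bar> \<le> K * M v \<and> (\<forall>i. \<exists>p. ((\<lambda>t. f (v + t *\<^sub>R axis i 1)) has_real_derivative p) (at 0)
                 \<and> \<bar>p\<bar> \<le> K * M v))"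
    proof (rule S.exist_scalar)
      show "(\<lambda>v. gradM v $ j) \<in> borel_measurable lborel"
        using borel_measurable_continuous_onI[OF continuous_on_component[OF gradM_cont]] by simp
    qed (fact comp_bound int0 comp_deriv)+
  qed
  then obtain F where F: "\<And>j. F j \<in> borel_measurable lborel \<and> integrable lborel (F j) \<and> (\<integral>v. F j v \<partial>lborel) = 0
          \<and> (\<forall>v. Qop \<sigma> M (F j) v = gradM v $ j)
          \<and> (\<exists>K. \<forall>v. \<bar>F j v\<bar> \<le> K * M v \<and> (\<forall>i. \<exists>p. ((\<lambda>t. F j (v + t *\<^sub>R axis i 1)) has_real_derivative p) (at 0)
                 \<and> \<bar>p\<bar> \<le> K * M v))"
    by metis
  have "\<forall>j. \<exists>K. \<forall>v. \<bar>F j v\<bar> \<le> K * M v \<and> (\<forall>i. \<exists>p. ((\<lambda>t. F j (v + t *\<^sub>R axis i 1)) has_real_derivative p) (at 0)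
                 \<and> \<bar>p\<bar> \<le> K * M v)" using F by blast
  then obtain K where K: "\<And>j v. \<bar>F j v\<bar> \<le> K j * M v \<and> (\<forall>i. \<exists>p. ((\<lambda>t. F j (v + t *\<^sub>R axis i 1)) has_real_derivative p) (at 0)
                 \<and> \<bar>p\<bar> \<le> K j * M v)" by metis
  have F_meas[measurable]: "F j \<in> borel_measurable lborel" for j using F by blast
  have F_int: "integrable lborel (F j)" for j using F by blast
  have F_int0: "(\<integral>v. F j v \<partial>lborel) = 0" for j using F by blast
  have F_Q: "Qop \<sigma> M (F j) v = gradM v $ j" for j v using F by blast
  define lam :: "real^'d \<Rightarrow> real^'d" where "lam v = (\<chi> j. F j v)" for v
  have lam_j: "lam v $ j = F j v" for v j unfolding lam_def by simp
  have lam_j': "(\<lambda>v. lam v $ j) = F j" for j using lam_j by auto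
  have K_nn: "0 \<le> K j" for j
  proof -
    have "0 \<le> K j * M 0" using K[of j 0] abs_ge_zero order_trans by blast
    then show ?thesis using M_pos[of 0] by (simp add: zero_le_mult_iff)
  qed
  define C' where "C' = (\<Sum>j\<in>UNIV. K j)"
  have K_le: "K j \<le> C'" for j unfolding C'_def using K_nn by (intro member_le_sum) auto
  have L2: "L2w M (F j)" for j
    unfolding L2w_def
  proof
    show "F j \<in> borel_measurable lborel" by measurable
    show "integrable lborel (\<lambda>v. (F j v)\<^sup>2 / M v)"
    proof (rule S.int_domM[where K="(K j)\<^sup>2"])
      show "(\<lambda>v. (F j v)\<^sup>2 / M v) \<in> borel_measurable lborel" by measurable
      fix v
      have a: "\<bar>F j v\<bar> \<le> K j * M v" using K by blast
      have "(F j v)\<^sup>2 \<le> (K j * M v)\<^sup>2"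
        using a by (metis abs_ge_zero abs_le_square_iff abs_of_nonneg order_trans power2_abs)
      then have "(F j v)\<^sup>2 / M v \<le> (K j * M v)\<^sup>2 / M v" using M_pos[of v] by (intro divide_right_mono) auto
      also have "\<dots> = (K j)\<^sup>2 * M v" using M_pos[of v] by (simp add: power2_eq_square)
      finally show "\<bar>(F j v)\<^sup>2 / M v\<bar> \<le> (K j)\<^sup>2 * M v" using M_pos[of v] by simp
    qed
  qed
  have lam_int: "integrable lborel lam" by (rule integrable_vec_comp) (simp add: lam_j F_int)
  have lam0: "(\<integral>v. lam v \<partial>lborel) = 0"
    unfolding vec_eq_iff using integral_vec_comp[OF lam_int] by (simp add: lam_j F_int0)
  have uniq: "AE v in lborel. \<mu> v = lam v"
    if m1: "\<forall>j. L2w M (\<lambda>v. \<mu> v $ j)" and m2: "AE v in lborel. \<forall>j. Qop \<sigma> M (\<lambda>u. \<mu> u $ j) v = gradM v $ j"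
      and m3: "(\<integral>v. \<mu> v \<partial>lborel) = 0" for \<mu> :: "real^'d \<Rightarrow> real^'d"
  proof -
    have mu_int: "integrable lborel \<mu>" by (rule integrable_vec_comp) (use m1 S.L2w_int in blast)
    have each: "AE v in lborel. \<mu> v $ j = F j v" for j
    proof (rule S.unique_scalar[OF F_int[of j]])
      show "\<And>v. Qop \<sigma> M (F j) v = gradM v $ j" by (rule F_Q)
      show "L2w M (\<lambda>v. \<mu> v $ j)" using m1 by blast
      show "AE v in lborel. Qop \<sigma> M (\<lambda>v. \<mu> v $ j) v = gradM v $ j"
        using m2 by (rule eventually_mono) blast
      show "(\<integral>v. \<mu> v $ j \<partial>lborel) = (\<integral>v. F j v \<partial>lborel)"
        using integral_vec_comp[OF mu_int, of j] m3 F_int0[of j] by simp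
    qed
    have "AE v in lborel. \<forall>j\<in>UNIV. \<mu> v $ j = F j v" by (rule AE_finite_allI) (auto intro: each)
    then show ?thesis by (rule eventually_mono) (simp add: vec_eq_iff lam_j)
  qed
  show ?thesis
  proof (intro exI[of _ lam] conjI allI impI)
    show "L2w M (\<lambda>v. lam v $ j)" for j unfolding lam_j' by (rule L2)
    show "AE v in lborel. \<forall>j. Qop \<sigma> M (\<lambda>u. lam u $ j) v = gradM v $ j"
      unfolding lam_j' by (simp add: F_Q)
    show "(\<integral>v. lam v \<partial>lborel) = 0" by (rule lam0)
    show "AE v in lborel. \<mu> v = lam v" if "(\<forall>j. L2w M (\<lambda>v. \<mu> v $ j))
             \<and> (AE v in lborel. \<forall>j. Qop \<sigma> M (\<lambda>u. \<mu> u $ j) v = gradM v $ j)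
             \<and> (\<integral>v. \<mu> v \<partial>lborel) = 0" for \<mu>
      using uniq that by blast
    show "\<exists>C'. \<forall>v. norm (lam v) \<le> C' * M v
                 \<and> (\<forall>i j. \<exists>p. ((\<lambda>t. lam (v + t *\<^sub>R axis i 1) $ j) has_real_derivative p) (at 0)
                             \<and> \<bar>p\<bar> \<le> C' * M v)"
    proof (rule exI[of _ C'], intro allI conjI)
      fix v
      have "norm (lam v) \<le> (\<Sum>j\<in>UNIV. \<bar>lam v $ j\<bar>)" by (rule norm_le_l1_cart)
      also have "\<dots> \<le> (\<Sum>j\<in>UNIV. K j * M v)" using K by (intro sum_mono) (simp add: lam_j)
      also have "\<dots> = C' * M v" unfolding C'_def by (simp add: sum_distrib_right)
      finally show "norm (lam v) \<le> C' * M v" .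
    next
      fix v i j
      obtain p where p: "((\<lambda>t. F j (v + t *\<^sub>R axis i 1)) has_real_derivative p) (at 0)" "\<bar>p\<bar> \<le> K j * M v"
        using K[of j v] by blast
      have "\<bar>p\<bar> \<le> C' * M v" using p(2) K_le[of j] M_pos[of v]
        by (meson less_imp_le mult_right_mono order_trans)
      then show "\<exists>p. ((\<lambda>t. lam (v + t *\<^sub>R axis i 1) $ j) has_real_derivative p) (at 0) \<and> \<bar>p\<bar> \<le> C' * M v"
        using p(1) unfolding lam_j by blast
    qed
  qed
qed

end
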